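(* Let $a\neq0$, $b>0$ and $d$ be integers with $d$ not a perfect square, $\alpha=a+b^2\sqrt d$, $N_\alpha=a^2-b^4d$, and suppose $N_\alpha$ is not a perfect square. Let $\varepsilon=(t+u\sqrt d)/2$ lie in the ring of integers of $\mathbb{Q}(\sqrt d)$, with $t,u$ nonzero integers, and let $N_\varepsilon=(t^2-du^2)/4$ be its norm. Suppose $x\neq0$ and $y>0$ are integers with $x+y^2\sqrt d=\alpha\varepsilon^2$. (a) There exist integers $f,r,s$ with $f\neq0$ such that \[ f^{2}\big(x+N_\varepsilon\sqrt{N_\alpha}\big)=\big(a+\sqrt{N_\alpha}\big)\big(r+s\sqrt{\operatorname{core}(N_\alpha)}\big)^{4},\qquad fy=b\big(r^2-\operatorname{core}(N_\alpha)s^2\big), \] and $f$ divides $4b^2\operatorname{rad}\!\big(f'\gcd(uN_\alpha/\operatorname{core}(N_\alpha),N_\varepsilon)\big)$ for some integer $f'$ with $f'\mid\operatorname{core}(N_\alpha)$ and $0<f'<\max\big(2,\sqrt{|\operatorname{core}(N_\alpha)|}\big)$. (b) If $-N_\alpha$ is a perfect square, then there exist integers $f,r,s$, $f\ne 0$, with $f\mid b^2\operatorname{rad}(\gcd(uN_\alpha,N_\varepsilon))$, $fy=b(r^2-\operatorname{core}(N_\alpha)s^2)$ and, for some choice of sign, $\pm f^{2}(x+N_\varepsilon\sqrt{N_\alpha})=(a+\sqrt{N_\alpha})(r+s\sqrt{\operatorname{core}(N_\alpha)})^{4}$. (c) If $\operatorname{core}(|N_\alpha|)=2^{\ell}p^{m}$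 with $\ell,m\in\{0,1\}$, $\ell+m\ge1$ and $p$ an odd prime, then the integers $f,r,s$ in (a) can be taken with $f\mid 4b^2\operatorname{rad}(\gcd(uN_\alpha/\operatorname{core}(N_\alpha),N_\varepsilon))$ when $N_\alpha\equiv1\pmod 4$ and $4\mid d$, and with $f\mid 2b^2\operatorname{rad}(\gcd(uN_\alpha/\operatorname{core}(N_\alpha),N_\varepsilon))$ otherwise.
   Context: For a nonzero integer $n$, $\operatorname{core}(n)$ is the unique squarefree integer with $n/\operatorname{core}(n)$ a perfect square ($\operatorname{core}(1)=1$); $\operatorname{rad}(n)$ is the product of the distinct primes dividing $n$, with $\operatorname{rad}(\pm1)=1$. For a negative integer $n$, $\sqrt n$ denotes $i\sqrt{|n|}$. *)

theory Defs
  imports Complex_Main "HOL-Computational_Algebra.Computational_Algebra"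
begin

definition core :: "int \<Rightarrow> int" where
  "core n = (THE c. squarefree c \<and> (\<exists>k::int. n = c * k^2))"

text \<open>Radical: product of the distinct (positive) primes dividing n; rad 0 = rad 1 = 1.\<close>
definition rad :: "int \<Rightarrow> int" where
  "rad n = (\<Prod>p\<in>prime_factors n. p)"

definition is_square :: "int \<Rightarrow> bool" where
  "is_square n \<longleftrightarrow> (\<exists>k::int. n = k^2)"

definition isqrt :: "int \<Rightarrow> complex" where
  "isqrt n = (if n \<ge> 0 then complex_of_real (sqrt (real_of_int n))
              else \<i> * complex_of_real (sqrt (real_of_int (- n))))"

definition alg_int :: "complex \<Rightarrow> bool" where
  "alg_int z \<longleftrightarrow> (\<exists>p :: complex poly. (\<forall>i. coeff p i \<in> \<int>) \<and> lead_coeff p = 1 \<and> poly p z = 0)"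

end

theory Submission
  imports Defs
begin

lemma rad_mult: fixes n p :: int assumes "n \<noteq> 0" "prime p"
  shows "multiplicity p (rad n) = (if p dvd n then 1 else 0)"
proof -
  have "rad n = (\<Prod>q\<in>prime_factors n. q ^ (1::nat))" by (simp add: rad_def)
  also have "multiplicity p \<dots> = (if p \<in> prime_factors n then 1 else 0)"
    by (rule multiplicity_prod_prime_powers) (auto simp: assms)
  finally show ?thesis using assms by (auto simp: prime_factors_dvd)
qed

lemma rad_nonzero: "rad (n::int) \<noteq> 0"
  unfolding rad_def by (auto simp: prime_factors_dvd)

lemma sqf_mult_le1: fixes c p :: int assumes "squarefree c" "prime p"
  shows "multiplicity p c \<le> 1"
  using assms squarefree_factorial_semiring''[of c] by (cases "c = 0") auto

lemma core_unique_aux: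
  fixes c1 c2 k1 k2 :: int
  assumes "squarefree c1" "squarefree c2" "c1 * k1^2 = c2 * k2^2" "c1 * k1^2 \<noteq> 0"
  shows "c1 = c2"
proof -
  have nz: "c1 \<noteq> 0" "c2 \<noteq> 0" "k1 \<noteq> 0" "k2 \<noteq> 0" using assms(3,4) by auto
  have "normalize c1 = normalize c2"
  proof (rule multiplicity_eq_imp_eq[OF nz(1,2)])
    fix p :: int assume p: "prime p"
    have pe: "prime_elem p" by (rule prime_imp_prime_elem[OF p])
    have "multiplicity p (c1 * k1^2) = multiplicity p c1 + 2 * multiplicity p k1"
      using pe nz by (simp add: prime_elem_multiplicity_mult_distrib prime_elem_multiplicity_power_distrib)
    moreover have "multiplicity p (c2 * k2^2) = multiplicity p c2 + 2 * multiplicity p k2"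
      using pe nz by (simp add: prime_elem_multiplicity_mult_distrib prime_elem_multiplicity_power_distrib)
    moreover have "multiplicity p c1 \<le> 1" "multiplicity p c2 \<le> 1"
      using sqf_mult_le1 assms p by auto
    ultimately have "multiplicity p c1 + 2 * multiplicity p k1 = multiplicity p c2 + 2 * multiplicity p k2"
      "multiplicity p c1 \<le> 1" "multiplicity p c2 \<le> 1" using assms(3) by metis+
    thus "multiplicity p c1 = multiplicity p c2" by presburger
  qed
  hence "\<bar>c1\<bar> = \<bar>c2\<bar>" by simp
  hence "c1 = c2 \<or> c1 = - c2" by (simp add: abs_eq_iff)
  moreover have "0 < c1 \<longleftrightarrow> 0 < c2"
  proof -
    have "0 < c1 * k1^2 \<longleftrightarrow> 0 < c1" using nz by (simp add: zero_less_mult_iff)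
    moreover have "0 < c2 * k2^2 \<longleftrightarrow> 0 < c2" using nz by (simp add: zero_less_mult_iff)
    ultimately show ?thesis using assms(3) by simp
  qed
  ultimately show ?thesis using nz by auto
qed

lemma core_eq: fixes c k n :: int
  assumes "squarefree c" "n = c * k^2" "n \<noteq> 0" shows "core n = c"
  unfolding core_def
proof (rule the_equality)
  show "squarefree c \<and> (\<exists>k. n = c * k\<^sup>2)" using assms by auto
next
  fix c' assume "squarefree c' \<and> (\<exists>k. n = c' * k\<^sup>2)"
  then obtain k' where "squarefree c'" "n = c' * k'^2" by auto
  then show "c' = c" using core_unique_aux[of c' c k' k] assms by auto
qed

lemma core_exists: fixes n :: int assumes "n \<noteq> 0"
  shows "\<exists>g>0. n = core n * g^2 \<and> squarefree (core n)"
proof -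
  define g where "g = \<bar>square_part n\<bar>"
  have "n = squarefree_part n * g^2" unfolding g_def
    using squarefree_decompose[of n] by simp
  moreover have "g > 0" using assms by (simp add: g_def)
  ultimately show ?thesis using core_eq[of "squarefree_part n" n g] assms by auto
qed

lemma isqrt_sq: "isqrt n ^ 2 = of_int n"
proof (cases "n \<ge> 0")
  case True thus ?thesis unfolding isqrt_def
    by (simp flip: of_real_power) 
next
  case False thus ?thesis unfolding isqrt_def
    by (simp add: power_mult_distrib flip: of_real_power)
qed

lemma isqrt_mult_sq: fixes c g :: int assumes "g > 0"
  shows "isqrt (c * g^2) = of_int g * isqrt c"
proof (cases "c \<ge> 0")
  case True
  hence "c * g^2 \<ge> 0" by simp
  moreover have "sqrt (real_of_int (c * g^2)) = real_of_int g * sqrt (real_of_int c)"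
    using assms by (simp add: real_sqrt_mult)
  ultimately show ?thesis using True unfolding isqrt_def by simp
next
  case False
  have "c * g^2 < 0" using False assms by (intro mult_neg_pos) auto
  hence "\<not> c * g^2 \<ge> 0" by simp
  moreover have "sqrt (real_of_int (-(c * g^2))) = real_of_int g * sqrt (real_of_int (-c))"
  proof -
    have "real_of_int (-(c * g^2)) = real_of_int (-c) * (real_of_int g)^2" by simp
    thus ?thesis using assms by (simp only: real_sqrt_mult real_sqrt_abs) simp
  qed
  ultimately show ?thesis using False unfolding isqrt_def by simp
qed

lemma sq_dvd_sq_int: fixes p q :: int assumes "q^2 dvd p^2" shows "q dvd p"
  using assms by (simp add: pow_divides_pow_iff) 

lemma isqrt_indep: fixes d p q :: int
  assumes "\<not> is_square d" "of_int p + of_int q * isqrt d = 0"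
  shows "q = 0 \<and> p = 0"
proof (cases "q = 0")
  case True thus ?thesis using assms by simp
next
  case qnz: False
  show ?thesis
  proof (cases "d \<ge> 0")
    case True
    hence "complex_of_real (real_of_int p + real_of_int q * sqrt (real_of_int d)) = 0"
      using assms unfolding isqrt_def by simp
    hence e: "real_of_int p + real_of_int q * sqrt (real_of_int d) = 0" by (simp only: of_real_eq_0_iff)
    hence "real_of_int q * sqrt (real_of_int d) = - real_of_int p" by linarith
    hence "(real_of_int q * sqrt (real_of_int d))^2 = (real_of_int p)^2" by simp
    hence "real_of_int q ^2 * real_of_int d = real_of_int p ^2" using True by (simp add: power_mult_distrib)
    hence eq: "q^2 * d = p^2" by (metis of_int_eq_iff of_int_mult of_int_power)
    hence "q^2 dvd p^2" by (metis dvd_triv_left)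
    hence "q dvd p" by (rule sq_dvd_sq_int)
    then obtain m where "p = q * m" by auto
    with eq qnz have "d = m^2" by (simp add: power_mult_distrib)
    thus ?thesis using assms(1) unfolding is_square_def by auto
  next
    case False
    hence "Im (of_int p + of_int q * isqrt d) = real_of_int q * sqrt (real_of_int (-d))"
      unfolding isqrt_def by simp
    moreover have "sqrt (real_of_int (-d)) > 0" using False by simp
    ultimately show ?thesis using assms qnz by simp
  qed
qed

lemma mpi_add: "map_poly (of_int :: int \<Rightarrow> 'a::comm_ring_1) (p + q) = map_poly of_int p + map_poly of_int q"
  by (rule poly_eqI) (simp add: coeff_map_poly)

lemma mpi_smult: "map_poly (of_int :: int \<Rightarrow> 'a::comm_ring_1) (smult c p) = smult (of_int c) (map_poly of_int p)"
  by (rule poly_eqI) (simp add: coeff_map_poly)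

lemma mpi_mult: "map_poly (of_int :: int \<Rightarrow> 'a::comm_ring_1) (p * q) = map_poly of_int p * map_poly of_int q"
  by (rule poly_eqI) (simp add: coeff_map_poly coeff_mult)

lemma alg_int_norm:
  fixes t u d :: int
  assumes nsq: "\<not> is_square d" and u: "u \<noteq> 0"
    and ai: "alg_int ((of_int t + of_int u * isqrt d) / 2)"
  shows "4 dvd t^2 - d * u^2"
proof -
  define z where "z = (of_int t + of_int u * isqrt d) / 2"
  define M where "M = t^2 - d * u^2"
  from ai obtain p :: "complex poly" where pc: "\<forall>i. coeff p i \<in> \<int>" and pl: "lead_coeff p = 1"
    and pz: "poly p z = 0" unfolding alg_int_def z_def by auto
  define p0 :: "int poly" where "p0 = map_poly (\<lambda>c. \<lfloor>Re c\<rfloor>) p"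
  have cp0: "coeff p0 i = \<lfloor>Re (coeff p i)\<rfloor>" for i unfolding p0_def by (simp add: coeff_map_poly)
  have pp0: "map_poly of_int p0 = p"
  proof (rule poly_eqI)
    fix i
    from pc obtain k where "coeff p i = of_int k" by (meson Ints_cases)
    thus "coeff (map_poly of_int p0) i = coeff p i" by (simp add: coeff_map_poly cp0)
  qed
  have dp: "degree p0 = degree p"
    using pp0 by (metis degree_map_poly of_int_0 of_int_eq_0_iff) 
  have lp0: "lead_coeff p0 = 1"
    using pl dp cp0 by simp
  define Q :: "int poly" where "Q = [:M, -4*t, 4:]"
  have Qnz: "Q \<noteq> 0" and dQ: "degree Q = 2" and lQ: "lead_coeff Q = 4" by (auto simp: Q_def)
  have w2: "isqrt d ^ 2 = of_int d" by (rule isqrt_sq)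
  have Qz: "poly (map_poly of_int Q) z = 0"
  proof -
    have "poly (map_poly of_int Q) z = of_int M - 4 * of_int t * z + 4 * z^2"
      by (simp add: Q_def map_poly_pCons algebra_simps power2_eq_square)
    also have "\<dots> = 0" unfolding z_def M_def using w2
      by (simp add: field_simps power2_eq_square)
    finally show ?thesis .
  qed
  obtain H R where pd: "pseudo_divmod p0 Q = (H, R)" by (metis surj_pair)
  define k where "k = Suc (degree p0) - degree Q"
  have eq: "smult (4 ^ k) p0 = Q * H + R" using pseudo_divmod(1)[OF Qnz pd] lQ dQ by (simp add: k_def)
  have dR: "R = 0 \<or> degree R < 2" using pseudo_divmod(2)[OF Qnz pd] dQ by simp
  have "poly (map_poly of_int (smult (4 ^ k) p0)) z = poly (map_poly of_int (Q * H + R)) z"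
    by (simp only: eq)
  moreover have "poly (map_poly of_int (smult (4 ^ k) p0)) z = 0" by (simp add: mpi_smult pp0 pz)
  moreover have "poly (map_poly of_int (Q * H + R)) z = poly (map_poly of_int R) z"
    by (simp add: mpi_add mpi_mult Qz)
  ultimately have Rz: "poly (map_poly of_int R) z = 0" by simp
  have R0: "R = 0"
  proof -
    have "degree R \<le> 1" using dR by auto
    hence "R = [:coeff R 0, coeff R 1:]"
    proof (intro poly_eqI)
      fix i assume "degree R \<le> 1"
      thus "coeff R i = coeff [:coeff R 0, coeff R 1:] i"
        by (cases i; cases "i - 1") (auto simp: coeff_pCons coeff_eq_0)
    qed
    then obtain r0 r1 where Rdef: "R = [:r0, r1:]" by blast
    have "of_int r0 + of_int r1 * z = 0" using Rz by (simp add: Rdef map_poly_pCons mult.commute)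
    hence "of_int (2*r0 + r1*t) + of_int (r1*u) * isqrt d = 0"
      unfolding z_def by (simp add: field_simps)
    hence "r1 * u = 0 \<and> 2*r0 + r1*t = 0" using isqrt_indep[OF nsq] by blast
    hence "r1 = 0" "r0 = 0" using u by auto
    thus ?thesis using Rdef by simp
  qed
  have QH: "Q * H = smult (4 ^ k) p0" using eq R0 by simp
  have lH: "lead_coeff Q * lead_coeff H = 4 ^ k"
    using arg_cong[OF QH, of lead_coeff] lp0 by (simp add: lead_coeff_mult)
  hence "4 * lead_coeff H = 4 ^ k" using lQ by simp
  hence k1: "k \<ge> 1" and lH': "lead_coeff H = 4 ^ (k - 1)"
  proof -
    assume a4: "4 * lead_coeff H = 4 ^ k"
    show "k \<ge> 1"
    proof (rule ccontr)
      assume "\<not> k \<ge> 1" hence "k = 0" by simp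
      hence "4 * lead_coeff H = 1" using a4 by simp
      thus False by presburger
    qed
    then obtain j where "k = Suc j" by (cases k) auto
    thus "lead_coeff H = 4 ^ (k - 1)" using a4 by simp
  qed
  have "content p0 = 1"
  proof -
    have "content p0 dvd lead_coeff p0" by simp
    hence "content p0 dvd 1" using lp0 by simp
    moreover have "content p0 \<ge> 0"
    proof -
      have "normalize (content p0) = content p0" by (rule normalize_content)
      hence "\<bar>content p0\<bar> = content p0" by (simp del: normalize_content)
      thus ?thesis by (metis abs_ge_zero)
    qed
    ultimately show ?thesis by simp
  qed
  hence "content (smult (4^k) p0) = 4^k" by simp
  hence cc: "content Q * content H = 4 ^ k" using eq R0 by (simp add: content_mult)
  have "content H dvd 4 ^ (k - 1)" using lH' by (metis content_dvd_coeff)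
  hence "content Q * content H dvd content Q * 4 ^ (k - 1)" by simp
  moreover have "content Q * content H = 4 * 4 ^ (k-1)" using cc k1
    by (metis One_nat_def Suc_pred less_eq_Suc_le power_Suc)
  ultimately have "4 * 4 ^ (k-1) dvd content Q * 4 ^ (k-1)" by simp
  hence "4 dvd content Q" by simp
  moreover have "content Q dvd coeff Q 0" by (rule content_dvd_coeff)
  ultimately have "4 dvd coeff Q 0" by (rule dvd_trans)
  thus ?thesis by (simp add: Q_def M_def)
qed

lemma mult_distrib_int: fixes p a b :: int assumes "prime p" "a \<noteq> 0" "b \<noteq> 0"
  shows "multiplicity p (a * b) = multiplicity p a + multiplicity p b"
  by (rule prime_elem_multiplicity_mult_distrib[OF prime_imp_prime_elem[OF assms(1)] assms(2,3)])

lemma sq_adjust: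
  fixes X Y :: int assumes X: "X \<noteq> 0" and Y: "Y \<noteq> 0"
  shows "\<exists>k Z. X * k^2 = Y * Z \<and> Z \<noteq> 0 \<and> (\<forall>p. prime p \<longrightarrow>
     (multiplicity p Z + multiplicity p Y \<le> multiplicity p X) \<or>
     (multiplicity p Z \<le> 1 \<and> multiplicity p X < multiplicity p Y))"
proof -
  define G where "G = gcd X Y"
  have Gnz: "G \<noteq> 0" using X by (simp add: G_def)
  obtain X1 Y1 where XG: "X = G * X1" and YG: "Y = G * Y1" and cop: "coprime X1 Y1"
    using gcd_coprime_exists[of X Y] X unfolding G_def by (metis gcd_eq_0_iff mult.commute)
  have X1: "X1 \<noteq> 0" and Y1: "Y1 \<noteq> 0" using X Y XG YG by auto
  define s where "s = squarefree_part Y1"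
  define q where "q = square_part Y1"
  have Ysq: "Y1 = s * q^2" unfolding s_def q_def by (rule squarefree_decompose)
  have snz: "s \<noteq> 0" and qnz: "q \<noteq> 0" using Ysq Y1 by auto
  define k where "k = s * q"
  define Z where "Z = X1 * s"
  have eq: "X * k^2 = Y * Z" unfolding k_def Z_def XG YG Ysq by (simp add: algebra_simps power2_eq_square)
  have Znz: "Z \<noteq> 0" using X1 snz by (simp add: Z_def)
  have "multiplicity p Z + multiplicity p Y \<le> multiplicity p X \<or>
        (multiplicity p Z \<le> 1 \<and> multiplicity p X < multiplicity p Y)" if p: "prime p" for p
  proof -
    have vX: "multiplicity p X = multiplicity p G + multiplicity p X1"
      using XG mult_distrib_int[OF p Gnz X1] by simp
    have vY: "multiplicity p Y = multiplicity p G + multiplicity p Y1"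
      using YG mult_distrib_int[OF p Gnz Y1] by simp
    have vZ: "multiplicity p Z = multiplicity p X1 + multiplicity p s"
      using mult_distrib_int[OF p X1 snz] by (simp add: Z_def)
    have vs: "multiplicity p s = multiplicity p Y1 mod 2"
      unfolding s_def using p by (rule prime_multiplicity_squarefree_part)
    have "multiplicity p X1 = 0 \<or> multiplicity p Y1 = 0"
    proof (rule ccontr)
      assume "\<not> ?thesis"
      hence "p dvd X1" "p dvd Y1" using X1 Y1 p by (auto simp: prime_multiplicity_gt_zero_iff prime_imp_prime_elem dest!: not_dvd_imp_multiplicity_0)
      hence "p dvd 1" using cop by (meson coprime_common_divisor)
      thus False using p by auto
    qed
    thus ?thesis using vX vY vZ vs by auto
  qed
  thus ?thesis using eq Znz by blast
qed

lemma main_setup: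
  fixes a b d t u x y Ne c g :: int
  assumes b: "b > 0" and y: "y > 0" and u: "u \<noteq> 0" and g: "g > 0" and c: "c \<noteq> 0"
    and E2: "4*y^2 = 2*t*u*a + b^2*(t^2+d*u^2)"
    and EN: "a^2 - b^4*d = c*g^2"
  shows "\<exists>r1 s1 \<kappa> \<delta> \<sigma>. r1 \<noteq> 0 \<and> s1 \<noteq> 0 \<and> coprime r1 s1 \<and>
     \<kappa> = gcd (r1^2 + c*s1^2) (2*r1*s1) \<and> \<delta> = gcd (t*b^2+u*a) (u*g) \<and> (\<sigma> = 1 \<or> \<sigma> = -1) \<and>
     \<kappa>*(t*b^2+u*a) = \<sigma>*\<delta>*(r1^2+c*s1^2) \<and> \<kappa>*(u*g) = -\<sigma>*\<delta>*(2*r1*s1)"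
proof -
  define A where "A = t*b^2+u*a"
  define U where "U = u*g"
  have Unz: "U \<noteq> 0" using u g by (simp add: U_def)
  have cU: "c*U^2 = u^2*(a^2 - b^4*d)" using EN by (simp add: U_def power_mult_distrib)
  have I1: "A^2 - c*U^2 = 4*b^2*y^2"
  proof -
    have "A^2 - c*U^2 = (t*b^2+u*a)^2 - u^2*(a^2 - b^4*d)" by (simp add: A_def cU)
    also have "\<dots> = b^2*(2*t*u*a + b^2*(t^2+d*u^2))" by algebra
    also have "\<dots> = 4*b^2*y^2" using E2 by simp
    finally show ?thesis .
  qed
  define m where "m = (if A + 2*b*y \<noteq> 0 then 2*b*y else -2*b*y)"
  define r0 where "r0 = A + m"
  have r0nz: "r0 \<noteq> 0" using b y by (auto simp: r0_def m_def)
  have m2: "m^2 = 4*b^2*y^2" by (simp add: m_def power_mult_distrib)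
  have R0: "r0^2 + c*U^2 = 2*r0*A"
  proof -
    have "(r0 - A)^2 = A^2 - c*U^2" using I1 m2 by (simp add: r0_def)
    thus ?thesis by (simp add: algebra_simps power2_eq_square)
  qed
  define h where "h = gcd r0 U"
  have hpos: "h > 0" using r0nz by (simp add: h_def)
  define r1 where "r1 = r0 div h"
  define s1' where "s1' = U div h"
  define s1 where "s1 = - s1'"
  have r0h: "r0 = h * r1" by (simp add: r1_def h_def)
  have Uh: "U = - h * s1" by (simp add: s1_def s1'_def h_def)
  have cop: "coprime r1 s1"
  proof -
    have "coprime r1 s1'" unfolding r1_def s1'_def h_def using r0nz by (intro div_gcd_coprime) auto
    thus ?thesis by (simp add: s1_def)
  qed
  have r1nz: "r1 \<noteq> 0" using r0nz r0h by auto
  have s1nz: "s1 \<noteq> 0" using Unz Uh by auto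
  have H1: "h*(r1^2 + c*s1^2) = 2*r1*A"
  proof -
    have "h*(h*(r1^2 + c*s1^2)) = h*(2*r1*A)" using R0 unfolding r0h Uh
      by (simp add: algebra_simps power2_eq_square)
    thus ?thesis using hpos by simp
  qed
  define \<kappa> where "\<kappa> = gcd (r1^2 + c*s1^2) (2*r1*s1)"
  define \<delta> where "\<delta> = gcd A U"
  have hk: "h*\<kappa> = 2*\<bar>r1\<bar>*\<delta>"
  proof -
    have "h*\<kappa> = gcd (h*(r1^2 + c*s1^2)) (h*(2*r1*s1))" unfolding \<kappa>_def
      using hpos gcd_mult_distrib_int[of h "r1^2 + c*s1^2" "2*r1*s1"] by simp
    also have "h*(2*r1*s1) = (2*r1)*(-U)" using Uh by simp
    also have "gcd (h*(r1^2 + c*s1^2)) ((2*r1)*(-U)) = gcd ((2*r1)*A) ((2*r1)*(-U))" using H1 by simp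
    also have "\<dots> = \<bar>2*r1\<bar> * gcd A (-U)" by (simp add: gcd_mult_distrib_int)
    also have "\<dots> = 2*\<bar>r1\<bar>*\<delta>" by (simp add: \<delta>_def abs_mult)
    finally show ?thesis .
  qed
  define \<sigma> where "\<sigma> = sgn r1"
  have sig: "\<sigma> = 1 \<or> \<sigma> = -1" using r1nz by (auto simp: \<sigma>_def sgn_if)
  have ar: "\<bar>r1\<bar> = \<sigma>*r1" by (simp add: \<sigma>_def abs_sgn)
  have K1: "\<kappa>*A = \<sigma>*\<delta>*(r1^2+c*s1^2)"
  proof -
    have "(2*r1)*(\<kappa>*A) = \<kappa>*(h*(r1^2 + c*s1^2))" using H1 by (simp add: algebra_simps)
    also have "\<dots> = (h*\<kappa>)*(r1^2 + c*s1^2)" by (simp add: algebra_simps)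
    also have "\<dots> = (2*r1)*(\<sigma>*\<delta>*(r1^2+c*s1^2))" unfolding hk ar by (simp add: algebra_simps)
    finally show ?thesis using r1nz by simp
  qed
  have K2: "\<kappa>*U = -\<sigma>*\<delta>*(2*r1*s1)"
  proof -
    have "\<kappa>*U = -(h*\<kappa>)*s1" using Uh by (simp add: algebra_simps)
    also have "\<dots> = -\<sigma>*\<delta>*(2*r1*s1)" unfolding hk ar by (simp add: algebra_simps)
    finally show ?thesis .
  qed
  show ?thesis
    apply (rule exI[of _ r1], rule exI[of _ s1], rule exI[of _ \<kappa>], rule exI[of _ \<delta>], rule exI[of _ \<sigma>])
    using r1nz s1nz cop sig K1 K2 by (simp add: \<kappa>_def \<delta>_def A_def U_def)
qed

lemma key_identity:
  fixes a b d t u x Ne c g :: int and w :: complex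
  assumes w: "w^2 = of_int c"
    and E1: "4*x = a*(t^2+d*u^2) + 2*b^2*d*t*u"
    and E3: "t^2 - d*u^2 = 4*Ne"
    and EN: "a^2 - b^4*d = c*g^2"
  shows "4*of_int b^4*(of_int x + of_int Ne * of_int g * w)
       = (of_int a + of_int g * w) * (of_int (t*b^2+u*a) - of_int (u*g) * w)^2"
proof -
  define A where "A = t*b^2+u*a"
  define U where "U = u*g"
  have cU: "c*U^2 = u^2*(a^2 - b^4*d)" using EN by (simp add: U_def power_mult_distrib)
  have cgU: "c*g*U = u*(a^2 - b^4*d)" using EN by (simp add: U_def power2_eq_square algebra_simps)
  have RE: "4*b^4*x = a*(A^2 + c*U^2) - 2*A*(c*g*U)"
  proof -
    have "4*b^4*x = b^4*(a*(t^2+d*u^2) + 2*b^2*d*t*u)" using E1 by (metis mult.assoc mult.commute)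
    also have "\<dots> = a*(A^2 + u^2*(a^2 - b^4*d)) - 2*A*(u*(a^2 - b^4*d))" unfolding A_def by algebra
    finally show ?thesis using cU cgU by simp
  qed
  have IM: "4*b^4*Ne*g = g*(A^2 + c*U^2) - 2*a*A*U"
  proof -
    have "4*b^4*Ne*g = g*(b^4*(t^2 - d*u^2))" using E3 by (simp add: algebra_simps)
    also have "\<dots> = g*(A^2 + u^2*(a^2 - b^4*d)) - 2*a*A*(u*g)" unfolding A_def by algebra
    finally show ?thesis using cU by (simp add: U_def)
  qed
  have "(of_int a + of_int g * w) * (of_int A - of_int U * w)^2
     = of_int a*(of_int A^2 + of_int U^2*w^2) - 2*of_int g*of_int A*of_int U*w^2
       + (of_int g*(of_int A^2 + of_int U^2*w^2) - 2*of_int a*of_int A*of_int U)*w"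
    by algebra
  also have "\<dots> = of_int (a*(A^2 + c*U^2) - 2*A*(c*g*U)) + of_int (g*(A^2 + c*U^2) - 2*a*A*U) * w"
    unfolding w by (simp add: algebra_simps)
  also have "\<dots> = of_int (4*b^4*x) + of_int (4*b^4*Ne*g) * w" by (simp only: RE IM)
  also have "\<dots> = 4*of_int b^4*(of_int x + of_int Ne * of_int g * w)" by (simp add: algebra_simps)
  finally show ?thesis by (simp add: A_def U_def)
qed

lemma kappa_dvd:
  fixes r1 s1 c :: int
  assumes cop: "coprime r1 s1"
  shows "gcd c r1 dvd gcd (r1^2 + c*s1^2) (2*r1*s1)"
    and "gcd (r1^2 + c*s1^2) (2*r1*s1) dvd 2 * gcd c r1"
proof -
  define \<kappa> where "\<kappa> = gcd (r1^2 + c*s1^2) (2*r1*s1)"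
  define e where "e = gcd c r1"
  have "e dvd r1^2 + c*s1^2" unfolding e_def by (simp add: power2_eq_square)
  moreover have "e dvd 2*r1*s1" unfolding e_def by simp
  ultimately show "gcd c r1 dvd gcd (r1^2 + c*s1^2) (2*r1*s1)" unfolding e_def by simp
  have k1: "\<kappa> dvd r1^2 + c*s1^2" and k2: "\<kappa> dvd 2*r1*s1" by (simp_all add: \<kappa>_def)
  have cks: "coprime \<kappa> s1"
  proof -
    have "gcd \<kappa> s1 dvd r1^2 + c*s1^2" using k1 by (meson dvd_trans gcd_dvd1)
    moreover have "gcd \<kappa> s1 dvd c*s1^2" by (simp add: power2_eq_square)
    ultimately have "gcd \<kappa> s1 dvd r1^2" by (metis add_diff_cancel_right' dvd_diff)
    moreover have "coprime (r1^2) s1" using cop by simp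
    ultimately have "gcd \<kappa> s1 dvd 1" by (meson coprime_common_divisor gcd_dvd2 is_unit_gcd)
    thus ?thesis by (simp add: coprime_iff_gcd_eq_1 gcd_unique_int)
  qed
  have "\<kappa> dvd 2*r1" using k2 cks by (metis coprime_dvd_mult_left_iff)
  moreover have "\<kappa> dvd 2*c"
  proof -
    have "\<kappa> dvd 2*(r1^2 + c*s1^2) - r1*(2*r1)" 
      using dvd_diff[OF dvd_mult[OF k1, of 2] dvd_mult[OF \<open>\<kappa> dvd 2*r1\<close>, of r1]] .
    hence "\<kappa> dvd (2*c)*(s1*s1)" by (simp add: algebra_simps power2_eq_square)
    moreover have "coprime \<kappa> (s1*s1)" using cks by simp
    ultimately show ?thesis by (metis coprime_dvd_mult_left_iff)
  qed
  ultimately have "\<kappa> dvd gcd (2*c) (2*r1)" by simp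
  also have "gcd (2*c) (2*r1) = 2 * e" unfolding e_def using gcd_mult_distrib_int[of 2 c r1] by simp
  finally show "gcd (r1^2 + c*s1^2) (2*r1*s1) dvd 2 * gcd c r1" by (simp add: \<kappa>_def e_def)
qed

lemma F1:
  fixes A U c r1 s1 \<kappa> \<delta> \<sigma> b y :: int
  assumes sig: "\<sigma> = 1 \<or> \<sigma> = -1" and I1: "A^2 - c*U^2 = 4*b^2*y^2"
    and K1: "\<kappa>*A = \<sigma>*\<delta>*(r1^2+c*s1^2)" and K2: "\<kappa>*U = -\<sigma>*\<delta>*(2*r1*s1)"
  shows "(\<delta>*(r1^2 - c*s1^2))^2 = (2*\<kappa>*b*y)^2"
proof -
  have s2: "\<sigma>^2 = 1" using sig by auto
  have "(2*\<kappa>*b*y)^2 = \<kappa>^2*(A^2 - c*U^2)" using I1 by (simp add: power_mult_distrib)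
  also have "\<dots> = (\<kappa>*A)^2 - c*(\<kappa>*U)^2" by (simp add: algebra_simps power2_eq_square)
  also have "\<dots> = \<sigma>^2*(\<delta>^2*((r1^2+c*s1^2)^2 - c*(2*r1*s1)^2))" unfolding K1 K2 by algebra
  also have "\<dots> = (\<delta>*(r1^2 - c*s1^2))^2" unfolding s2 by algebra
  finally show ?thesis by simp
qed

lemma KEY:
  fixes a b d t u x Ne c g r1 s1 \<kappa> \<delta> \<sigma> :: int and w :: complex
  assumes w: "w^2 = of_int c"
    and E1: "4*x = a*(t^2+d*u^2) + 2*b^2*d*t*u"
    and E3: "t^2 - d*u^2 = 4*Ne"
    and EN: "a^2 - b^4*d = c*g^2"
    and sig: "\<sigma> = 1 \<or> \<sigma> = -1"
    and K1: "\<kappa>*(t*b^2+u*a) = \<sigma>*\<delta>*(r1^2+c*s1^2)" and K2: "\<kappa>*(u*g) = -\<sigma>*\<delta>*(2*r1*s1)"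
  shows "4*of_int b^4*of_int \<kappa>^2*(of_int x + of_int Ne * of_int g * w)
       = (of_int a + of_int g * w) * of_int \<delta>^2 * (of_int r1 + of_int s1 * w)^4"
proof -
  have s2: "(of_int \<sigma>::complex)^2 = 1" using sig by auto
  have K1': "of_int \<kappa> * of_int (t*b^2+u*a) = (of_int \<sigma>*of_int \<delta>*(of_int r1^2+of_int c*of_int s1^2) :: complex)"
    using arg_cong[OF K1, of "of_int :: int \<Rightarrow> complex"] by simp
  have K2': "of_int \<kappa> * of_int (u*g) = (-of_int \<sigma>*of_int \<delta>*(2*of_int r1*of_int s1) :: complex)"
    using arg_cong[OF K2, of "of_int :: int \<Rightarrow> complex"] by simp
  have "of_int \<kappa>^2 * (of_int (t*b^2+u*a) - of_int (u*g) * w)^2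
      = (of_int \<kappa> * of_int (t*b^2+u*a) - of_int \<kappa> * of_int (u*g) * w)^2"
    by (simp add: algebra_simps power2_eq_square)
  also have "\<dots> = of_int \<sigma>^2 * of_int \<delta>^2 * (of_int r1^2+of_int c*of_int s1^2 + 2*of_int r1*of_int s1*w)^2"
    unfolding K1' K2' by algebra
  also have "of_int r1^2+of_int c*of_int s1^2 + 2*of_int r1*of_int s1*w = (of_int r1 + of_int s1 * w)^2"
    unfolding w[symmetric] by algebra
  finally have "of_int \<kappa>^2 * (of_int (t*b^2+u*a) - of_int (u*g) * w)^2 = of_int \<delta>^2 * (of_int r1 + of_int s1 * w)^4"
    unfolding s2 by simp
  moreover have "4*of_int b^4*(of_int x + of_int Ne * of_int g * w)
       = (of_int a + of_int g * w) * (of_int (t*b^2+u*a) - of_int (u*g) * w)^2"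
    by (rule key_identity[OF w E1 E3 EN])
  ultimately show ?thesis
  proof -
    assume h1: "of_int \<kappa>^2 * (of_int (t*b^2+u*a) - of_int (u*g) * w)^2 = of_int \<delta>^2 * (of_int r1 + of_int s1 * w)^4"
      and h2: "4*of_int b^4*(of_int x + of_int Ne * of_int g * w)
       = (of_int a + of_int g * w) * (of_int (t*b^2+u*a) - of_int (u*g) * w)^2"
    have "4*of_int b^4*of_int \<kappa>^2*(of_int x + of_int Ne * of_int g * w)
       = of_int \<kappa>^2 * (4*of_int b^4*(of_int x + of_int Ne * of_int g * w))" by (simp add: algebra_simps)
    also have "\<dots> = (of_int a + of_int g * w) * (of_int \<kappa>^2 * (of_int (t*b^2+u*a) - of_int (u*g) * w)^2)"
      unfolding h2 by (simp add: algebra_simps)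
    also have "\<dots> = (of_int a + of_int g * w) * of_int \<delta>^2 * (of_int r1 + of_int s1 * w)^4"
      unfolding h1 by (simp add: algebra_simps)
    finally show ?thesis .
  qed
qed

lemma sign_fix:
  fixes f y b n :: int assumes "(f*y)^2 = (b*n)^2"
  shows "\<exists>f'. (f' = f \<or> f' = -f) \<and> f'*y = b*n"
proof -
  have "f*y = b*n \<or> f*y = -(b*n)" using assms by (simp add: power2_eq_iff)
  thus ?thesis
  proof
    assume "f*y = b*n" thus ?thesis by blast
  next
    assume "f*y = -(b*n)" hence "(-f)*y = b*n" by simp
    thus ?thesis by blast
  qed
qed

lemma cancel_key:
  fixes B K D F L P \<beta> \<rho> :: complex
  assumes "B \<noteq> 0" "K \<noteq> 0" "4*B*K^2*L = P*D^2*\<beta>^4" "F^2*D^2*\<beta>^4 = 4*B*K^2*\<rho>^4"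
  shows "F^2*L = P*\<rho>^4"
proof -
  have "4*B*K^2*(F^2*L) = F^2*(P*D^2*\<beta>^4)" using assms(3) by (simp add: algebra_simps)
  also have "\<dots> = P*(F^2*D^2*\<beta>^4)" by (simp add: algebra_simps)
  also have "\<dots> = 4*B*K^2*(P*\<rho>^4)" using assms(4) by (simp add: algebra_simps)
  finally have eq: "4*B*K^2*(F^2*L) = 4*B*K^2*(P*\<rho>^4)" .
  moreover have "4*B*K^2 \<noteq> 0" using assms(1,2) by simp
  ultimately show ?thesis using mult_left_cancel[of "4*B*K^2" "F^2*L" "P*\<rho>^4"] by blast
qed

lemma opt1:
  fixes a b c g x Ne r1 s1 \<kappa> \<delta> f k y :: int
  assumes KEY: "\<forall>w::complex. w^2 = of_int c \<longrightarrow> 4*of_int b^4*of_int \<kappa>^2*(of_int x + of_int Ne*of_int g*w)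
          = (of_int a + of_int g*w)*of_int \<delta>^2*(of_int r1 + of_int s1*w)^4"
    and F1: "(\<delta>*(r1^2 - c*s1^2))^2 = (2*\<kappa>*b*y)^2"
    and nz: "b \<noteq> 0" "\<kappa> \<noteq> 0" "\<delta> \<noteq> 0"
    and fe: "f*\<delta> = 2*b^2*\<kappa>*k^2"
  shows "\<exists>f'. (f' = f \<or> f' = -f) \<and> f'*y = b*((k*r1)^2 - c*(k*s1)^2) \<and>
     (\<forall>w::complex. w^2 = of_int c \<longrightarrow> of_int (f'^2)*(of_int x + of_int Ne*of_int g*w)
          = (of_int a + of_int g*w)*(of_int (k*r1) + of_int (k*s1)*w)^4)"
proof -
  have "(f*y)^2*\<delta>^2 = (b*((k*r1)^2 - c*(k*s1)^2))^2*\<delta>^2"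
  proof -
    have "(f*y)^2*\<delta>^2 = (f*\<delta>)^2*y^2" by (simp add: algebra_simps power2_eq_square)
    also have "\<dots> = 4*b^4*\<kappa>^2*k^4*y^2" unfolding fe by algebra
    also have "\<dots> = b^2*k^4*(2*\<kappa>*b*y)^2" by algebra
    also have "\<dots> = b^2*k^4*(\<delta>*(r1^2 - c*s1^2))^2" unfolding F1 ..
    also have "\<dots> = (b*((k*r1)^2 - c*(k*s1)^2))^2*\<delta>^2" by algebra
    finally show ?thesis .
  qed
  hence "(f*y)^2 = (b*((k*r1)^2 - c*(k*s1)^2))^2" using nz by simp
  then obtain f' where f': "f' = f \<or> f' = -f" "f'*y = b*((k*r1)^2 - c*(k*s1)^2)" using sign_fix by blast
  have "of_int (f'^2)*(of_int x + of_int Ne*of_int g*w)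
          = (of_int a + of_int g*w)*(of_int (k*r1) + of_int (k*s1)*w)^4" if w: "w^2 = of_int c" for w :: complex
  proof -
    have ff: "f'^2 = f^2" using f' by auto
    have fe': "(of_int f::complex) * of_int \<delta> = 2*of_int b^2*of_int \<kappa>*of_int k^2"
      using arg_cong[OF fe, of "of_int :: int \<Rightarrow> complex"] by simp
    have "(of_int f::complex)^2*of_int \<delta>^2*(of_int r1 + of_int s1*w)^4 = 4*of_int b^4*of_int \<kappa>^2*(of_int (k*r1) + of_int (k*s1)*w)^4"
    proof -
      have "(of_int f::complex)^2*of_int \<delta>^2*(of_int r1 + of_int s1*w)^4 = (of_int f * of_int \<delta>)^2*(of_int r1 + of_int s1*w)^4"
        by (simp add: power_mult_distrib)
      also have "\<dots> = 4*of_int b^4*of_int \<kappa>^2*(of_int (k*r1) + of_int (k*s1)*w)^4"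
        unfolding fe' by (simp only: of_int_mult) algebra
      finally show ?thesis .
    qed
    moreover have K: "4*of_int b^4*of_int \<kappa>^2*(of_int x + of_int Ne*of_int g*w)
          = (of_int a + of_int g*w)*of_int \<delta>^2*(of_int r1 + of_int s1*w)^4" using KEY w by blast
    moreover have "(of_int b::complex)^4 \<noteq> 0" "(of_int \<kappa>::complex) \<noteq> 0" using nz by auto
    ultimately have "(of_int f::complex)^2*(of_int x + of_int Ne*of_int g*w) = (of_int a + of_int g*w)*(of_int (k*r1) + of_int (k*s1)*w)^4"
      using cancel_key by blast
    moreover have "of_int (f'^2) = (of_int f :: complex)^2" using ff by (metis of_int_power)
    ultimately show ?thesis by simp
  qed
  thus ?thesis using f' by blast
qed

lemma opt2:
  fixes a b c g x Ne r1 s1 \<kappa> \<delta> f k y e c' r1' \<kappa>' :: int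
  assumes KEY: "\<forall>w::complex. w^2 = of_int c \<longrightarrow> 4*of_int b^4*of_int \<kappa>^2*(of_int x + of_int Ne*of_int g*w)
          = (of_int a + of_int g*w)*of_int \<delta>^2*(of_int r1 + of_int s1*w)^4"
    and F1: "(\<delta>*(r1^2 - c*s1^2))^2 = (2*\<kappa>*b*y)^2"
    and nz: "b \<noteq> 0" "\<kappa> \<noteq> 0" "\<delta> \<noteq> 0" "e \<noteq> 0"
    and ce: "c = e*c'" and re: "r1 = e*r1'" and ke: "\<kappa> = e*\<kappa>'"
    and fe: "f*\<delta> = 2*b^2*\<kappa>'*c'*k^2"
  shows "\<exists>f'. (f' = f \<or> f' = -f) \<and> f'*y = b*((k*c'*s1)^2 - c*(k*r1')^2) \<and>
     (\<forall>w::complex. w^2 = of_int c \<longrightarrow> of_int (f'^2)*(of_int x + of_int Ne*of_int g*w)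
          = (of_int a + of_int g*w)*(of_int (k*c'*s1) + of_int (k*r1')*w)^4)"
proof -
  have "(f*y)^2*(\<delta>^2*e^4) = (b*((k*c'*s1)^2 - c*(k*r1')^2))^2*(\<delta>^2*e^4)"
  proof -
    have "(f*y)^2*(\<delta>^2*e^4) = (f*\<delta>)^2*y^2*e^4" by algebra
    also have "\<dots> = b^2*k^4*c^2*(2*\<kappa>*b*y)^2" unfolding fe ce ke by algebra
    also have "\<dots> = b^2*k^4*c^2*(\<delta>*(r1^2 - c*s1^2))^2" unfolding F1 ..
    also have "\<dots> = (b*((k*c'*s1)^2 - c*(k*r1')^2))^2*(\<delta>^2*e^4)" unfolding re ce by algebra
    finally show ?thesis .
  qed
  hence "(f*y)^2 = (b*((k*c'*s1)^2 - c*(k*r1')^2))^2" using nz by simp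
  then obtain f' where f': "f' = f \<or> f' = -f" "f'*y = b*((k*c'*s1)^2 - c*(k*r1')^2)" using sign_fix by blast
  have "of_int (f'^2)*(of_int x + of_int Ne*of_int g*w)
          = (of_int a + of_int g*w)*(of_int (k*c'*s1) + of_int (k*r1')*w)^4" if w: "w^2 = of_int c" for w :: complex
  proof -
    have ff: "f'^2 = f^2" using f' by auto
    have fe': "(of_int f::complex) * of_int \<delta> = 2*of_int b^2*of_int \<kappa>'*of_int c'*of_int k^2"
      using arg_cong[OF fe, of "of_int :: int \<Rightarrow> complex"] by simp
    have ce': "(of_int c::complex) = of_int e * of_int c'" using ce by simp
    have re': "(of_int r1::complex) = of_int e * of_int r1'" using re by simp
    have ke': "(of_int \<kappa>::complex) = of_int e * of_int \<kappa>'" using ke by simp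
    have "(of_int f::complex)^2*of_int \<delta>^2*(of_int r1 + of_int s1*w)^4 * of_int e^4
        = 4*of_int b^4*of_int \<kappa>^2*(of_int (k*c'*s1) + of_int (k*r1')*w)^4 * of_int e^4"
    proof -
      have "(of_int f::complex)^2*of_int \<delta>^2*(of_int r1 + of_int s1*w)^4 * of_int e^4
          = (of_int f * of_int \<delta>)^2*(of_int r1 + of_int s1*w)^4 * of_int e^4"
        by algebra
      also have "\<dots> = 4*of_int b^4*of_int \<kappa>^2*(of_int (k*c'*s1) + of_int (k*r1')*w)^4 * of_int e^4"
        unfolding fe' re' ke' using w unfolding ce' by (simp only: of_int_mult) algebra
      finally show ?thesis .
    qed
    hence 1: "(of_int f::complex)^2*of_int \<delta>^2*(of_int r1 + of_int s1*w)^4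
        = 4*of_int b^4*of_int \<kappa>^2*(of_int (k*c'*s1) + of_int (k*r1')*w)^4" using nz by simp
    have K: "4*of_int b^4*of_int \<kappa>^2*(of_int x + of_int Ne*of_int g*w)
          = (of_int a + of_int g*w)*of_int \<delta>^2*(of_int r1 + of_int s1*w)^4" using KEY w by blast
    have "(of_int b::complex)^4 \<noteq> 0" "(of_int \<kappa>::complex) \<noteq> 0" using nz by auto
    hence "(of_int f::complex)^2*(of_int x + of_int Ne*of_int g*w) = (of_int a + of_int g*w)*(of_int (k*c'*s1) + of_int (k*r1')*w)^4"
      using cancel_key K 1 by blast
    moreover have "of_int (f'^2) = (of_int f :: complex)^2" using ff by (metis of_int_power)
    ultimately show ?thesis by simp
  qed
  thus ?thesis using f' by blast
qed

lemma prime_dvd_4: fixes p :: int assumes "prime p" "p dvd 4" shows "p = 2"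
proof -
  have "p dvd 2 * 2" using assms by simp
  hence "p dvd 2" using assms prime_dvd_mult_iff by blast
  moreover have "p > 0" using assms prime_gt_0_int by blast
  ultimately have "p \<le> 2" by (simp add: zdvd_imp_le)
  moreover have "p \<ge> 2" using assms prime_ge_2_int by blast
  ultimately show ?thesis by simp
qed

lemma escape:
  fixes a b d t u Ne c g p :: int
  assumes p: "prime p" "p \<noteq> 2" and pA: "p dvd (t*b^2+u*a)" and pU: "p dvd (u*g)" and pb: "\<not> p dvd b"
    and E3: "t^2 - d*u^2 = 4*Ne" and EN: "a^2 - b^4*d = c*g^2"
  shows "p dvd Ne \<and> p dvd u*g^2 \<and> p dvd u*(c*g^2)"
proof -
  have id: "4*b^4*Ne = u^2*(c*g^2) - (u*a - t*b^2)*(t*b^2+u*a)"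
  proof -
    have "4*b^4*Ne = b^4*(t^2 - d*u^2)" using E3 by simp
    also have "\<dots> = u^2*(a^2 - b^4*d) - (u*a - t*b^2)*(t*b^2+u*a)" by algebra
    finally show ?thesis using EN by simp
  qed
  have ug: "p dvd u \<or> p dvd g" using pU p prime_dvd_mult_iff by blast
  have h1: "p dvd u*g^2" using ug by (auto simp: power2_eq_square)
  have h2: "p dvd u*(c*g^2)" using ug by (auto simp: power2_eq_square)
  have "p dvd u^2*(c*g^2)" using ug by (auto simp: power2_eq_square)
  moreover have "p dvd (u*a - t*b^2)*(t*b^2+u*a)" using pA by simp
  ultimately have "p dvd 4*b^4*Ne" unfolding id by (rule dvd_diff)
  hence "p dvd 4 \<or> p dvd b^4 \<or> p dvd Ne" using p prime_dvd_mult_iff by (metis mult.assoc)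
  moreover have "\<not> p dvd 4" using prime_dvd_4 p by blast
  moreover have "\<not> p dvd b^4" using pb p prime_dvd_power by blast
  ultimately show ?thesis using h1 h2 by blast
qed

lemma mult_pow2: fixes p b :: int assumes "prime p" "b \<noteq> 0"
  shows "multiplicity p (b^2) = 2 * multiplicity p b"
  using prime_elem_multiplicity_power_distrib[OF prime_imp_prime_elem[OF assms(1)] assms(2), of 2] by simp

lemma mult_4: fixes p :: int assumes "prime p" shows "multiplicity p 4 = 2 * multiplicity p 2"
  using mult_pow2[OF assms, of 2] by simp

lemma mult_2_le: fixes p :: int assumes "prime p" shows "multiplicity p 2 \<le> 1"
proof (cases "p = 2")
  case True thus ?thesis using assms by (simp add: multiplicity_prime prime_imp_prime_elem)
next
  case False
  have "\<not> p dvd 2"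
  proof
    assume "p dvd 2"
    moreover have "p > 0" using assms prime_gt_0_int by blast
    ultimately have "p \<le> 2" by (simp add: zdvd_imp_le)
    moreover have "p \<ge> 2" using assms prime_ge_2_int by blast
    ultimately show False using False by simp
  qed
  thus ?thesis by (simp add: not_dvd_imp_multiplicity_0)
qed

lemma mult_2_odd: fixes p :: int assumes "prime p" "p \<noteq> 2" shows "multiplicity p 2 = 0"
proof -
  have "\<not> p dvd 2"
  proof
    assume "p dvd 2"
    moreover have "p > 0" using assms prime_gt_0_int by blast
    ultimately have "p \<le> 2" by (simp add: zdvd_imp_le)
    moreover have "p \<ge> 2" using assms prime_ge_2_int by blast
    ultimately show False using assms by simp
  qed
  thus ?thesis by (simp add: not_dvd_imp_multiplicity_0)
qed

lemma mult_2_2: "multiplicity (2::int) 2 = 1"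
  by (simp add: multiplicity_prime prime_imp_prime_elem)

lemma bound_a:
  fixes Z \<delta> b \<phi> \<kappa>' G k :: int
  assumes nz: "Z \<noteq> 0" "\<delta> \<noteq> 0" "b \<noteq> 0" "\<phi> \<noteq> 0" "G \<noteq> 0" "\<kappa>' \<noteq> 0"
    and L: "\<forall>p. prime p \<longrightarrow> (multiplicity p Z + multiplicity p \<delta> \<le> multiplicity p (2*b^2*\<phi>*\<kappa>')) \<or>
             (multiplicity p Z \<le> 1 \<and> multiplicity p (2*b^2*\<phi>*\<kappa>') < multiplicity p \<delta>)"
    and k2: "\<kappa>' dvd 2"
    and sqf: "\<forall>p. prime p \<longrightarrow> multiplicity p \<phi> \<le> 1"
    and esc: "\<forall>p. prime p \<longrightarrow> p \<noteq> 2 \<longrightarrow> p dvd \<delta> \<longrightarrow> \<not> p dvd b \<longrightarrow> p dvd G"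
  shows "Z dvd 4*b^2*rad (\<bar>\<phi>\<bar>*G)"
proof (rule multiplicity_le_imp_dvd[OF nz(1)])
  fix p :: int assume p: "prime p"
  have rnz: "rad (\<bar>\<phi>\<bar>*G) \<noteq> 0" by (rule rad_nonzero)
  have vB: "multiplicity p (4*b^2*rad (\<bar>\<phi>\<bar>*G)) = 2*multiplicity p 2 + 2*multiplicity p b + (if p dvd \<bar>\<phi>\<bar>*G then 1 else 0)"
    using p nz rnz by (simp add: mult_distrib_int mult_pow2 mult_4 rad_mult)
  have vX: "multiplicity p (2*b^2*\<phi>*\<kappa>') = multiplicity p 2 + 2*multiplicity p b + multiplicity p \<phi> + multiplicity p \<kappa>'"
    using p nz by (simp add: mult_distrib_int mult_pow2)
  have vk: "multiplicity p \<kappa>' \<le> multiplicity p 2" using k2 nz by (simp add: dvd_imp_multiplicity_le)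
  have vphi: "multiplicity p \<phi> \<le> (if p dvd \<bar>\<phi>\<bar>*G then 1 else 0)"
  proof (cases "p dvd \<phi>")
    case True thus ?thesis using sqf p by auto
  next
    case False thus ?thesis by (simp add: not_dvd_imp_multiplicity_0)
  qed
  show "multiplicity p Z \<le> multiplicity p (4*b^2*rad (\<bar>\<phi>\<bar>*G))"
  proof (cases "multiplicity p Z + multiplicity p \<delta> \<le> multiplicity p (2*b^2*\<phi>*\<kappa>')")
    case True thus ?thesis using vB vX vk vphi by linarith
  next
    case False
    hence B: "multiplicity p Z \<le> 1" "multiplicity p (2*b^2*\<phi>*\<kappa>') < multiplicity p \<delta>" using L p by auto
    hence pd: "p dvd \<delta>" by (metis gr_implies_not0 not_dvd_imp_multiplicity_0)
    show ?thesis
    proof (cases "p = 2")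
      case True thus ?thesis using vB B mult_2_2 by simp
    next
      case p2: False
      show ?thesis
      proof (cases "p dvd b")
        case True
        hence "multiplicity p b > 0" using prime_multiplicity_gt_zero_iff[OF prime_imp_prime_elem[OF p] nz(3)] by simp
        hence "multiplicity p b \<ge> 1" by simp
        thus ?thesis using vB B by linarith
      next
        case False
        hence "p dvd G" using esc p p2 pd by blast
        hence "p dvd \<bar>\<phi>\<bar>*G" by simp
        thus ?thesis using vB B by simp
      qed
    qed
  qed
qed

lemma bound_c:
  fixes Z \<delta> b \<phi> \<kappa>' G K :: int
  assumes nz: "Z \<noteq> 0" "\<delta> \<noteq> 0" "b \<noteq> 0" "\<phi> \<noteq> 0" "G \<noteq> 0" "\<kappa>' \<noteq> 0" "K \<noteq> 0"
    and L: "\<forall>p. prime p \<longrightarrow> (multiplicity p Z + multiplicity p \<delta> \<le> multiplicity p (2*b^2*\<phi>*\<kappa>')) \<or>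
             (multiplicity p Z \<le> 1 \<and> multiplicity p (2*b^2*\<phi>*\<kappa>') < multiplicity p \<delta>)"
    and k2: "\<kappa>' dvd 2" and f2: "\<phi> dvd 2" and K2: "2 dvd K"
    and H2: "multiplicity 2 \<phi> + multiplicity 2 \<kappa>' + 1 \<le> multiplicity 2 K + multiplicity 2 \<delta>"
    and esc: "\<forall>p. prime p \<longrightarrow> p \<noteq> 2 \<longrightarrow> p dvd \<delta> \<longrightarrow> \<not> p dvd b \<longrightarrow> p dvd G"
  shows "Z dvd K*b^2*rad G"
proof (rule multiplicity_le_imp_dvd[OF nz(1)])
  fix p :: int assume p: "prime p"
  have rnz: "rad G \<noteq> 0" by (rule rad_nonzero)
  have vB: "multiplicity p (K*b^2*rad G) = multiplicity p K + 2*multiplicity p b + (if p dvd G then 1 else 0)"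
    using p nz rnz by (simp add: mult_distrib_int mult_pow2 rad_mult)
  have vX: "multiplicity p (2*b^2*\<phi>*\<kappa>') = multiplicity p 2 + 2*multiplicity p b + multiplicity p \<phi> + multiplicity p \<kappa>'"
    using p nz by (simp add: mult_distrib_int mult_pow2)
  have vk: "multiplicity p \<kappa>' \<le> multiplicity p 2" using k2 nz by (simp add: dvd_imp_multiplicity_le)
  have vf: "multiplicity p \<phi> \<le> multiplicity p 2" using f2 nz by (simp add: dvd_imp_multiplicity_le)
  show "multiplicity p Z \<le> multiplicity p (K*b^2*rad G)"
  proof (cases "p = 2")
    case True
    have vK: "multiplicity p K \<ge> 1"
    proof -
      have "multiplicity p 2 \<le> multiplicity p K" using K2 nz by (simp add: dvd_imp_multiplicity_le)
      thus ?thesis using True mult_2_2 by simp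
    qed
    show ?thesis
    proof (cases "multiplicity p Z + multiplicity p \<delta> \<le> multiplicity p (2*b^2*\<phi>*\<kappa>')")
      case A: True
      thus ?thesis using vB vX H2 True mult_2_2 by simp
    next
      case False
      hence "multiplicity p Z \<le> 1" using L p by auto
      thus ?thesis using vB vK by linarith
    qed
  next
    case p2: False
    have z2: "multiplicity p 2 = 0" using mult_2_odd[OF p p2] .
    show ?thesis
    proof (cases "multiplicity p Z + multiplicity p \<delta> \<le> multiplicity p (2*b^2*\<phi>*\<kappa>')")
      case True thus ?thesis using vB vX vk vf z2 by linarith
    next
      case False
      hence B: "multiplicity p Z \<le> 1" "multiplicity p (2*b^2*\<phi>*\<kappa>') < multiplicity p \<delta>" using L p by auto
      hence pd: "p dvd \<delta>" by (metis gr_implies_not0 not_dvd_imp_multiplicity_0)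
      show ?thesis
      proof (cases "p dvd b")
        case True
        hence "multiplicity p b > 0" using prime_multiplicity_gt_zero_iff[OF prime_imp_prime_elem[OF p] nz(3)] by simp
        thus ?thesis using vB B by linarith
      next
        case False
        hence "p dvd G" using esc p p2 pd by blast
        thus ?thesis using vB B by simp
      qed
    qed
  qed
qed

lemma bound_b:
  fixes Z \<delta> b j G k :: int
  assumes nz: "Z \<noteq> 0" "\<delta> \<noteq> 0" "b \<noteq> 0" "G \<noteq> 0"
    and j: "j = 1 \<or> j = 2"
    and eq: "(2*b^2*j)*k^2 = \<delta>*Z"
    and L: "\<forall>p. prime p \<longrightarrow> (multiplicity p Z + multiplicity p \<delta> \<le> multiplicity p (2*b^2*j)) \<or>
             (multiplicity p Z \<le> 1 \<and> multiplicity p (2*b^2*j) < multiplicity p \<delta>)"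
    and d1: "multiplicity 2 \<delta> \<ge> 1"
    and par: "even (multiplicity 2 j + 1 + multiplicity 2 \<delta>)"
    and esc: "\<forall>p. prime p \<longrightarrow> p \<noteq> 2 \<longrightarrow> p dvd \<delta> \<longrightarrow> \<not> p dvd b \<longrightarrow> p dvd G"
  shows "Z dvd b^2*rad G"
proof (rule multiplicity_le_imp_dvd[OF nz(1)])
  fix p :: int assume p: "prime p"
  have rnz: "rad G \<noteq> 0" by (rule rad_nonzero)
  have jnz: "j \<noteq> 0" using j by auto
  have knz: "k \<noteq> 0" using eq nz jnz by auto
  have vB: "multiplicity p (b^2*rad G) = 2*multiplicity p b + (if p dvd G then 1 else 0)"
    using p nz rnz by (simp add: mult_distrib_int mult_pow2 rad_mult)
  have vX: "multiplicity p (2*b^2*j) = multiplicity p 2 + 2*multiplicity p b + multiplicity p j"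
    using p nz jnz by (simp add: mult_distrib_int mult_pow2)
  have vj: "multiplicity p j \<le> multiplicity p 2" using j p by (auto simp: dvd_imp_multiplicity_le)
  have veq: "multiplicity p (2*b^2*j) + 2 * multiplicity p k = multiplicity p \<delta> + multiplicity p Z"
  proof -
    have "multiplicity p ((2*b^2*j)*k^2) = multiplicity p (\<delta>*Z)" using eq by simp
    thus ?thesis using p nz jnz knz by (simp add: mult_distrib_int mult_pow2)
  qed
  show "multiplicity p Z \<le> multiplicity p (b^2*rad G)"
  proof (cases "p = 2")
    case True
    have vj2: "multiplicity p j \<le> 1" using vj True mult_2_2 by simp
    show ?thesis
    proof (cases "multiplicity p Z + multiplicity p \<delta> \<le> multiplicity p (2*b^2*j)")
      case A: True
      have "multiplicity 2 j \<le> 1" using vj2 True by simp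
      hence "multiplicity 2 j + 1 \<le> multiplicity 2 \<delta>" using d1 par by presburger
      hence "multiplicity p j + 1 \<le> multiplicity p \<delta>" using True by simp
      thus ?thesis using A vB vX True mult_2_2 by simp
    next
      case False
      hence "multiplicity p Z \<le> 1" using L p by auto
      moreover have "even (multiplicity p Z)"
      proof -
        have "multiplicity 2 (2*b^2*j) + 2 * multiplicity 2 k = multiplicity 2 \<delta> + multiplicity 2 Z"
          "multiplicity 2 (2*b^2*j) = 1 + 2*multiplicity 2 b + multiplicity 2 j" using veq vX True mult_2_2 by simp_all
        hence "even (multiplicity 2 Z)" using par by presburger
        thus ?thesis using True by simp
      qed
      ultimately have "multiplicity p Z = 0" by presburger
      thus ?thesis by simp
    qed
  next
    case p2: False
    have z2: "multiplicity p 2 = 0" using mult_2_odd[OF p p2] .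
    show ?thesis
    proof (cases "multiplicity p Z + multiplicity p \<delta> \<le> multiplicity p (2*b^2*j)")
      case True thus ?thesis using vB vX vj z2 by linarith
    next
      case False
      hence B: "multiplicity p Z \<le> 1" "multiplicity p (2*b^2*j) < multiplicity p \<delta>" using L p by auto
      hence pd: "p dvd \<delta>" by (metis gr_implies_not0 not_dvd_imp_multiplicity_0)
      show ?thesis
      proof (cases "p dvd b")
        case True
        hence "multiplicity p b > 0" using prime_multiplicity_gt_zero_iff[OF prime_imp_prime_elem[OF p] nz(3)] by simp
        thus ?thesis using vB B by linarith
      next
        case False
        hence "p dvd G" using esc p p2 pd by blast
        thus ?thesis using vB B by simp
      qed
    qed
  qed
qed

lemma sqf_not4: fixes c :: int assumes "squarefree c" shows "\<not> 4 dvd c"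
proof
  assume "4 dvd c" hence "2^2 dvd c" by simp
  hence "is_unit (2::int)" using assms squarefreeD by blast
  thus False by simp
qed

lemma four_dvd_2: "4 dvd 2*(X::int) \<Longrightarrow> 2 dvd X" by presburger

lemma c_even_facts:
  fixes c r1 s1 \<kappa> \<kappa>' e \<delta> b y :: int
  assumes ce: "even c" and sq: "squarefree c" and cop: "coprime r1 s1"
    and kd: "\<kappa> = gcd (r1^2 + c*s1^2) (2*r1*s1)" and ed: "e = gcd c r1" and ke: "\<kappa> = e*\<kappa>'"
    and F1: "(\<delta>*(r1^2 - c*s1^2))^2 = (2*\<kappa>*b*y)^2"
  shows "even \<delta> \<and> odd \<kappa>'"
proof -
  have n4: "\<not> 4 dvd c" using sqf_not4[OF sq] .
  obtain c2 where c2: "c = 2*c2" using ce by blast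
  have c2o: "odd c2" using n4 c2 by auto
  have F1': "\<delta>*(r1^2 - c*s1^2) = 2*\<kappa>*b*y \<or> \<delta>*(r1^2 - c*s1^2) = -(2*\<kappa>*b*y)"
    using F1 by (simp add: power2_eq_iff)
  show ?thesis
  proof (cases "even r1")
    case False
    have "odd (r1^2 + c*s1^2)" using False ce by simp
    moreover have "\<kappa> dvd r1^2 + c*s1^2" using kd by simp
    ultimately have "odd \<kappa>" by (meson dvd_trans)
    hence "odd \<kappa>'" using ke by simp
    moreover have "even \<delta>"
    proof -
      have "even (2*\<kappa>*b*y)" by simp
      hence "even (\<delta>*(r1^2 - c*s1^2))" using F1' by (metis even_minus)
      moreover have "odd (r1^2 - c*s1^2)" using False ce by simp
      ultimately show ?thesis using even_mult_iff by blast
    qed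
    ultimately show ?thesis by simp
  next
    case True
    then obtain r2 where r2: "r1 = 2*r2" by blast
    have s1o: "odd s1" using cop True by (metis coprime_common_divisor odd_one)
    have ee: "even e" using ed ce True by simp
    have id1: "r1^2 + c*s1^2 = 2*(2*r2^2 + c2*s1^2)" using r2 c2 by (simp add: algebra_simps power2_eq_square)
    have o1: "odd (2*r2^2 + c2*s1^2)" using c2o s1o by simp
    have "\<not> 4 dvd \<kappa>"
    proof
      assume "4 dvd \<kappa>"
      moreover have "\<kappa> dvd r1^2 + c*s1^2" using kd by simp
      ultimately have "4 dvd 2*(2*r2^2 + c2*s1^2)" using id1 by (metis dvd_trans)
      hence "2 dvd (2*r2^2 + c2*s1^2)" by (rule four_dvd_2)
      thus False using o1 by simp
    qed
    hence "odd \<kappa>'" using ke ee by (metis dvd_mult_left mult_dvd_mono numeral_Bit0_eq_double mult_2)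
    moreover have "even \<delta>"
    proof -
      have id2: "r1^2 - c*s1^2 = 2*(2*r2^2 - c2*s1^2)" using r2 c2 by (simp add: algebra_simps power2_eq_square)
      have o2: "odd (2*r2^2 - c2*s1^2)" using c2o s1o by simp
      obtain e2 where "e = 2*e2" using ee by blast
      hence "4 dvd 2*\<kappa>*b*y" using ke by simp
      hence "4 dvd \<delta>*(r1^2 - c*s1^2)" using F1' by auto
      hence "4 dvd 2*(\<delta>*(2*r2^2 - c2*s1^2))" using id2 by (simp add: algebra_simps)
      hence "2 dvd \<delta>*(2*r2^2 - c2*s1^2)" by (rule four_dvd_2)
      thus ?thesis using o2 by simp
    qed
    ultimately show ?thesis by simp
  qed
qed

lemma c_odd_special:
  fixes a b d t u y Ne c g r1 s1 \<kappa> e \<delta> \<sigma> :: int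
  assumes co: "odd c" and dl: "odd \<delta>" and ke: "even \<kappa>" and k2e: "\<kappa> dvd 2*e" and ec: "e dvd c"
    and sig: "\<sigma> = 1 \<or> \<sigma> = -1"
    and K2: "\<kappa>*(u*g) = -\<sigma>*\<delta>*(2*r1*s1)" and kd: "\<kappa> dvd r1^2 + c*s1^2" and cop: "coprime r1 s1"
    and E2: "4*y^2 = 2*t*u*a + b^2*(t^2+d*u^2)"
    and E3: "t^2 - d*u^2 = 4*Ne"
    and EN: "a^2 - b^4*d = c*g^2"
  shows "(a^2 - b^4*d) mod 4 = 1 \<and> 4 dvd d"
proof -
  have eo: "odd e" using ec co by (meson dvd_trans)
  have n4: "\<not> 4 dvd \<kappa>"
  proof
    assume "4 dvd \<kappa>" hence "4 dvd 2*e" using k2e by (metis dvd_trans)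
    thus False using eo by presburger
  qed
  obtain k2 where k2: "\<kappa> = 2*k2" using ke by blast
  have k2o: "odd k2" using n4 k2 by auto
  have "even (r1^2 + c*s1^2)" using kd ke by (meson dvd_trans)
  hence "even r1 \<longleftrightarrow> even s1" using co by auto
  moreover have "\<not> (even r1 \<and> even s1)" using cop by (metis coprime_common_divisor odd_one)
  ultimately have r1o: "odd r1" and s1o: "odd s1" by auto
  have "k2*(u*g) = -\<sigma>*\<delta>*(r1*s1)" using K2 k2 by (simp add: algebra_simps)
  moreover have "odd (-\<sigma>*\<delta>*(r1*s1))" using sig dl r1o s1o by auto
  ultimately have "odd (u*g)" by (metis even_mult_iff)
  hence uo: "odd u" and go: "odd g" by auto
  have No: "odd (a^2 - b^4*d)" using EN co go by simp
  have de: "even d"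
  proof (rule ccontr)
    assume do: "odd d"
    have "t^2 = d*u^2 + 4*Ne" using E3 by simp
    hence to: "odd t" using do uo by (metis even_add even_mult_iff even_power zero_less_numeral dvd_mult pos2 even_numeral)
    have "4*y^2 = 2*t*u*a + b^2*(2*t^2 - 4*Ne)" using E2 E3 by (simp add: algebra_simps)
    hence "2*(y^2 + b^2*Ne) = t*(u*a + b^2*t)" by (simp add: algebra_simps power2_eq_square)
    hence "even (t*(u*a + b^2*t))" by (metis dvd_triv_left)
    hence "even (u*a + b^2*t)" using to by simp
    hence "even a \<longleftrightarrow> even b" using uo to by simp
    hence "even (a^2 - b^4*d)" using do by simp
    thus False using No by simp
  qed
  have te: "even t"
  proof -
    have "t^2 = d*u^2 + 4*Ne" using E3 by simp
    thus ?thesis using de by (metis even_add even_mult_iff even_power zero_less_numeral dvd_mult pos2 even_numeral)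
  qed
  have d4: "4 dvd d"
  proof -
    obtain t1 where "t = 2*t1" using te by blast
    hence "d*u^2 = 4*(t1^2 - Ne)" using E3 by (simp add: algebra_simps power2_eq_square)
    hence "4 dvd d*u^2" by simp
    moreover have "coprime 4 (u^2)"
    proof -
      have "coprime 2 u" using uo by (simp add: coprime_left_2_iff_odd)
      hence c22: "coprime ((2::int)*2) u" using coprime_mult_left_iff[of "2::int" 2 u] by blast
      hence "coprime 4 u" using c22 by simp
      thus ?thesis by simp
    qed
    ultimately show ?thesis by (metis coprime_commute coprime_dvd_mult_left_iff)
  qed
  have ao: "odd a" using No de by simp
  obtain a1 where a1: "a = 2*a1+1" using ao by (metis oddE)
  obtain d1 where d1: "d = 4*d1" using d4 by blast
  have "a^2 - b^4*d = 4*(a1^2 + a1 - b^4*d1) + 1" using a1 d1 by (simp add: algebra_simps power2_eq_square)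
  hence "(a^2 - b^4*d) mod 4 = 1" by presburger
  thus ?thesis using d4 by simp
qed

lemma cancel_key':
  fixes B K D S L P \<beta> \<rho> :: complex
  assumes "B \<noteq> 0" "K \<noteq> 0" "4*B*K^2*L = P*D^2*\<beta>^4" "S*D^2*\<beta>^4 = 4*B*K^2*\<rho>^4"
  shows "S*L = P*\<rho>^4"
proof -
  have "4*B*K^2*(S*L) = S*(P*D^2*\<beta>^4)" using assms(3) by (simp add: algebra_simps)
  also have "\<dots> = P*(S*D^2*\<beta>^4)" by (simp add: algebra_simps)
  also have "\<dots> = 4*B*K^2*(P*\<rho>^4)" using assms(4) by (simp add: algebra_simps)
  finally have eq: "4*B*K^2*(S*L) = 4*B*K^2*(P*\<rho>^4)" .
  moreover have "4*B*K^2 \<noteq> 0" using assms(1,2) by simp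
  ultimately show ?thesis using mult_left_cancel[of "4*B*K^2" "S*L" "P*\<rho>^4"] by blast
qed

lemma opt3:
  fixes a b g x Ne r1 s1 \<kappa> \<delta> f k y l m1 m2 :: int
  assumes KEY: "\<forall>w::complex. w^2 = of_int (-1) \<longrightarrow> 4*of_int b^4*of_int \<kappa>^2*(of_int x + of_int Ne*of_int g*w)
          = (of_int a + of_int g*w)*of_int \<delta>^2*(of_int r1 + of_int s1*w)^4"
    and F1: "(\<delta>*(r1^2 - (-1)*s1^2))^2 = (2*\<kappa>*b*y)^2"
    and nz: "b \<noteq> 0" "\<kappa> \<noteq> 0" "\<delta> \<noteq> 0" "l \<noteq> 0"
    and m1: "r1 - s1 = l*m1" and m2: "r1 + s1 = l*m2"
    and fe: "f*\<delta>*l^2 = 4*b^2*\<kappa>*k^2"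
  shows "\<exists>f'. (f' = f \<or> f' = -f) \<and> f'*y = b*((k*m1)^2 - (-1)*(k*m2)^2) \<and>
     (\<forall>w::complex. w^2 = of_int (-1) \<longrightarrow> - of_int (f'^2)*(of_int x + of_int Ne*of_int g*w)
          = (of_int a + of_int g*w)*(of_int (k*m1) + of_int (k*m2)*w)^4)"
proof -
  have "(f*y)^2*(\<delta>^2*l^4) = (b*((k*m1)^2 - (-1)*(k*m2)^2))^2*(\<delta>^2*l^4)"
  proof -
    have "(f*y)^2*(\<delta>^2*l^4) = (f*\<delta>*l^2)^2*y^2" by algebra
    also have "\<dots> = 4*b^2*k^4*(2*\<kappa>*b*y)^2" unfolding fe by algebra
    also have "\<dots> = 4*b^2*k^4*(\<delta>*(r1^2 - (-1)*s1^2))^2" unfolding F1 ..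
    also have "\<dots> = b^2*k^4*\<delta>^2*((r1 - s1)^2 + (r1+s1)^2)^2" by algebra
    also have "\<dots> = (b*((k*m1)^2 - (-1)*(k*m2)^2))^2*(\<delta>^2*l^4)" unfolding m1 m2 by algebra
    finally show ?thesis .
  qed
  hence "(f*y)^2 = (b*((k*m1)^2 - (-1)*(k*m2)^2))^2" using nz by simp
  then obtain f' where f': "f' = f \<or> f' = -f" "f'*y = b*((k*m1)^2 - (-1)*(k*m2)^2)" using sign_fix by blast
  have "- of_int (f'^2)*(of_int x + of_int Ne*of_int g*w)
          = (of_int a + of_int g*w)*(of_int (k*m1) + of_int (k*m2)*w)^4" if w: "w^2 = of_int (-1)" for w :: complex
  proof -
    have ff: "f'^2 = f^2" using f' by auto
    have w': "w^2 = -1" using w by simp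
    have fe': "(of_int f::complex) * of_int \<delta> * of_int l^2 = 4*of_int b^2*of_int \<kappa>*of_int k^2"
      using arg_cong[OF fe, of "of_int :: int \<Rightarrow> complex"] by simp
    have m1': "(of_int r1::complex) - of_int s1 = of_int l * of_int m1" using m1 by (metis of_int_diff of_int_mult)
    have m2': "(of_int r1::complex) + of_int s1 = of_int l * of_int m2" using m2 by (metis of_int_add of_int_mult)
    have lr: "of_int l * (of_int (k*m1) + of_int (k*m2)*w) = of_int k * (1 + w) * (of_int r1 + of_int s1*w)"
    proof -
      have "of_int l * (of_int (k*m1) + of_int (k*m2)*w) = of_int k * ((of_int l * of_int m1) + (of_int l * of_int m2)*w)"
        by (simp add: algebra_simps)
      also have "\<dots> = of_int k * ((of_int r1 - of_int s1) + (of_int r1 + of_int s1)*w)" unfolding m1' m2' ..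
      also have "\<dots> = of_int k * (1 + w) * (of_int r1 + of_int s1*w)" using w' by algebra
      finally show ?thesis .
    qed
    have "(uminus ((of_int f :: complex)^2))*of_int \<delta>^2*(of_int r1 + of_int s1*w)^4 * of_int l^4
        = 4*of_int b^4*of_int \<kappa>^2*(of_int (k*m1) + of_int (k*m2)*w)^4 * of_int l^4"
    proof -
      have "(uminus ((of_int f :: complex)^2))*of_int \<delta>^2*(of_int r1 + of_int s1*w)^4 * of_int l^4
          = uminus ((of_int f * of_int \<delta> * of_int l^2)^2*(of_int r1 + of_int s1*w)^4)"
        by algebra
      also have "\<dots> = uminus (16*of_int b^4*of_int \<kappa>^2*of_int k^4*(of_int r1 + of_int s1*w)^4)"
        unfolding fe' by algebra
      also have "\<dots> = 4*of_int b^4*of_int \<kappa>^2*(of_int k * (1 + w) * (of_int r1 + of_int s1*w))^4"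
        using w' by algebra
      also have "\<dots> = 4*of_int b^4*of_int \<kappa>^2*(of_int l * (of_int (k*m1) + of_int (k*m2)*w))^4" unfolding lr ..
      also have "\<dots> = 4*of_int b^4*of_int \<kappa>^2*(of_int (k*m1) + of_int (k*m2)*w)^4 * of_int l^4" by algebra
      finally show ?thesis .
    qed
    moreover have l4: "(of_int l::complex)^4 \<noteq> 0" using nz by simp
    ultimately have 1: "(uminus ((of_int f :: complex)^2))*of_int \<delta>^2*(of_int r1 + of_int s1*w)^4
        = 4*of_int b^4*of_int \<kappa>^2*(of_int (k*m1) + of_int (k*m2)*w)^4" using mult_right_cancel[OF l4] by blast
    have K: "4*of_int b^4*of_int \<kappa>^2*(of_int x + of_int Ne*of_int g*w)
          = (of_int a + of_int g*w)*of_int \<delta>^2*(of_int r1 + of_int s1*w)^4" using KEY w by blast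
    have "(of_int b::complex)^4 \<noteq> 0" "(of_int \<kappa>::complex) \<noteq> 0" using nz by auto
    hence "(uminus ((of_int f :: complex)^2))*(of_int x + of_int Ne*of_int g*w) = (of_int a + of_int g*w)*(of_int (k*m1) + of_int (k*m2)*w)^4"
      using cancel_key' K 1 by blast
    moreover have "of_int (f'^2) = (of_int f :: complex)^2" using ff by (metis of_int_power)
    ultimately show ?thesis by simp
  qed
  thus ?thesis using f' by blast
qed

lemma sumsq_4: fixes A U M :: int assumes "A^2 + U^2 = 4*M" shows "even A \<and> even U"
proof -
  have "even (A^2 + U^2)" using assms by simp
  hence "even A \<longleftrightarrow> even U" by simp
  moreover have "\<not> (odd A \<and> odd U)"
  proof
    assume "odd A \<and> odd U"
    then obtain a' u' where "A = 2*a'+1" "U = 2*u'+1" by (meson oddE)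
    hence "A^2 + U^2 = 4*(a'^2 + a' + u'^2 + u') + 2" by (simp add: algebra_simps power2_eq_square)
    hence "4*(a'^2 + a' + u'^2 + u') + 2 = 4*M" using assms by simp
    thus False by presburger
  qed
  ultimately show ?thesis by blast
qed

lemma extract_eqs:
  fixes a b d t u x y :: int
  assumes nsq: "\<not> is_square d"
    and H: "of_int x + of_int (y^2) * isqrt d
         = (of_int a + of_int (b^2) * isqrt d) * ((of_int t + of_int u * isqrt d) / 2)^2"
  shows "4*x = a*(t^2+d*u^2) + 2*b^2*d*t*u \<and> 4*y^2 = 2*t*u*a + b^2*(t^2+d*u^2)"
proof -
  define W where "W = isqrt d"
  have W2: "W^2 = of_int d" unfolding W_def by (rule isqrt_sq)
  have H': "4*(of_int x + of_int y^2 * W) = (of_int a + of_int b^2 * W) * (of_int t + of_int u * W)^2"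
    using H unfolding W_def[symmetric] by (simp add: power_divide field_simps)
  have "(of_int a + of_int b^2 * W) * (of_int t + of_int u * W)^2
      = of_int a*(of_int t^2 + W^2*of_int u^2) + 2*of_int b^2*W^2*of_int t*of_int u
        + (2*of_int t*of_int u*of_int a + of_int b^2*(of_int t^2 + W^2*of_int u^2))*W" by algebra
  also have "\<dots> = of_int (a*(t^2+d*u^2) + 2*b^2*d*t*u) + of_int (2*t*u*a + b^2*(t^2+d*u^2)) * W"
    unfolding W2 by simp
  finally have "of_int (4*x - (a*(t^2+d*u^2) + 2*b^2*d*t*u)) + of_int (4*y^2 - (2*t*u*a + b^2*(t^2+d*u^2))) * W = 0"
    using H' by (simp add: algebra_simps)
  hence "4*y^2 - (2*t*u*a + b^2*(t^2+d*u^2)) = 0 \<and> 4*x - (a*(t^2+d*u^2) + 2*b^2*d*t*u) = 0"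
    using isqrt_indep[OF nsq] unfolding W_def by blast
  thus ?thesis by simp
qed

theorem proposition3p1:
  fixes a b d t u x y :: int
  assumes "a \<noteq> 0" and "b > 0" and "\<not> is_square d"
    and "\<not> is_square (a^2 - b^4 * d)"
    and "t \<noteq> 0" and "u \<noteq> 0"
    and "alg_int ((of_int t + of_int u * isqrt d) / 2)"
    and "x \<noteq> 0" and "y > 0"
    and "of_int x + of_int (y^2) * isqrt d
         = (of_int a + of_int (b^2) * isqrt d) * ((of_int t + of_int u * isqrt d) / 2)^2"
  defines "N\<alpha> \<equiv> a^2 - b^4 * d"
    and "N\<epsilon> \<equiv> (t^2 - d * u^2) div 4"
  shows
    "(\<exists>f r s f'. f \<noteq> 0
        \<and> of_int (f^2) * (of_int x + of_int N\<epsilon> * isqrt N\<alpha>)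
            = (of_int a + isqrt N\<alpha>) * (of_int r + of_int s * isqrt (core N\<alpha>))^4
        \<and> f * y = b * (r^2 - core N\<alpha> * s^2)
        \<and> f' dvd core N\<alpha> \<and> 0 < f'
        \<and> real_of_int f' < max 2 (sqrt \<bar>real_of_int (core N\<alpha>)\<bar>)
        \<and> f dvd 4 * b^2 * rad (f' * gcd (u * N\<alpha> div core N\<alpha>) N\<epsilon>))
     \<and> (is_square (- N\<alpha>) \<longrightarrow>
        (\<exists>f r s. f \<noteq> 0
          \<and> f dvd b^2 * rad (gcd (u * N\<alpha>) N\<epsilon>)
          \<and> f * y = b * (r^2 - core N\<alpha> * s^2)
          \<and> (of_int (f^2) * (of_int x + of_int N\<epsilon> * isqrt N\<alpha>)
               = (of_int a + isqrt N\<alpha>) * (of_int r + of_int s * isqrt (core N\<alpha>))^4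
             \<or> - of_int (f^2) * (of_int x + of_int N\<epsilon> * isqrt N\<alpha>)
               = (of_int a + isqrt N\<alpha>) * (of_int r + of_int s * isqrt (core N\<alpha>))^4)))
     \<and> (\<forall>(l::nat) (m::nat) (p::int). l \<le> 1 \<and> m \<le> 1 \<and> l + m \<ge> 1 \<and> prime p \<and> odd p
          \<and> core \<bar>N\<alpha>\<bar> = 2^l * p^m \<longrightarrow>
        (\<exists>f r s. f \<noteq> 0
          \<and> of_int (f^2) * (of_int x + of_int N\<epsilon> * isqrt N\<alpha>)
              = (of_int a + isqrt N\<alpha>) * (of_int r + of_int s * isqrt (core N\<alpha>))^4
          \<and> f * y = b * (r^2 - core N\<alpha> * s^2)
          \<and> (if N\<alpha> mod 4 = 1 \<and> 4 dvd d
             then f dvd 4 * b^2 * rad (gcd (u * N\<alpha> div core N\<alpha>) N\<epsilon>)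
             else f dvd 2 * b^2 * rad (gcd (u * N\<alpha> div core N\<alpha>) N\<epsilon>))))"
  proof -
  note nsq = assms(3)
  have E12: "4*x = a*(t^2+d*u^2) + 2*b^2*d*t*u \<and> 4*y^2 = 2*t*u*a + b^2*(t^2+d*u^2)"
    by (rule extract_eqs[OF nsq assms(10)])
  hence E1: "4*x = a*(t^2+d*u^2) + 2*b^2*d*t*u" and E2: "4*y^2 = 2*t*u*a + b^2*(t^2+d*u^2)" by auto
  have "4 dvd t^2 - d*u^2" by (rule alg_int_norm[OF nsq assms(6) assms(7)])
  hence E3: "t^2 - d*u^2 = 4*N\<epsilon>" unfolding N\<epsilon>_def by simp
  have Nnz: "N\<alpha> \<noteq> 0" using assms(4) unfolding N\<alpha>_def is_square_def by auto
  obtain g where g: "g > 0" "N\<alpha> = core N\<alpha> * g^2" "squarefree (core N\<alpha>)" using core_exists[OF Nnz] by blast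
  define c where "c = core N\<alpha>"
  have cnz: "c \<noteq> 0" using g Nnz by (auto simp: c_def)
  have EN: "a^2 - b^4*d = c*g^2" using g unfolding c_def N\<alpha>_def by simp
  have sqc: "squarefree c" using g by (simp add: c_def)
  define W where "W = isqrt c"
  have W2: "W^2 = of_int c" unfolding W_def by (rule isqrt_sq)
  have isN: "isqrt N\<alpha> = of_int g * W" using g isqrt_mult_sq[of g c] unfolding W_def c_def by simp
  have bnz: "b \<noteq> 0" using assms(2) by simp
  obtain r1 s1 \<kappa> \<delta> \<sigma> where S: "r1 \<noteq> 0" "s1 \<noteq> 0" "coprime r1 s1"
     "\<kappa> = gcd (r1^2 + c*s1^2) (2*r1*s1)" "\<delta> = gcd (t*b^2+u*a) (u*g)" "\<sigma> = 1 \<or> \<sigma> = -1"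
     "\<kappa>*(t*b^2+u*a) = \<sigma>*\<delta>*(r1^2+c*s1^2)" "\<kappa>*(u*g) = -\<sigma>*\<delta>*(2*r1*s1)"
    using main_setup[OF assms(2) assms(9) assms(6) g(1) cnz E2 EN] by blast
  have kpos: "\<kappa> > 0" using S by simp
  have dpos: "\<delta> > 0" using S assms(6) g by simp
  have I1: "(t*b^2+u*a)^2 - c*(u*g)^2 = 4*b^2*y^2"
  proof -
    have cU: "c*(u*g)^2 = u^2*(a^2 - b^4*d)" using EN by (simp add: power_mult_distrib)
    have "(t*b^2+u*a)^2 - c*(u*g)^2 = (t*b^2+u*a)^2 - u^2*(a^2 - b^4*d)" by (simp add: cU)
    also have "\<dots> = b^2*(2*t*u*a + b^2*(t^2+d*u^2))" by algebra
    also have "\<dots> = 4*b^2*y^2" using E2 by simp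
    finally show ?thesis .
  qed
  have F1: "(\<delta>*(r1^2 - c*s1^2))^2 = (2*\<kappa>*b*y)^2" by (rule F1[OF S(6) I1 S(7) S(8)])
  have KEYc: "\<forall>w::complex. w^2 = of_int c \<longrightarrow> 4*of_int b^4*of_int \<kappa>^2*(of_int x + of_int N\<epsilon>*of_int g*w)
          = (of_int a + of_int g*w)*of_int \<delta>^2*(of_int r1 + of_int s1*w)^4"
    using KEY[OF _ E1 E3 EN S(6) S(7) S(8)] by blast
  define e where "e = gcd c r1"
  have epos: "e > 0" using cnz by (simp add: e_def)
  have edk: "e dvd \<kappa>" and kd2e: "\<kappa> dvd 2*e" using kappa_dvd[OF S(3), of c] S(4) by (simp_all add: e_def)
  define \<kappa>' where "\<kappa>' = \<kappa> div e"
  have ke: "\<kappa> = e*\<kappa>'" using edk by (simp add: \<kappa>'_def)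
  have k'pos: "\<kappa>' > 0" using ke kpos epos by (simp add: zero_less_mult_iff)
  have k'2: "\<kappa>' dvd 2"
  proof -
    have "e*\<kappa>' dvd e*2" using kd2e ke by (simp add: mult.commute)
    thus ?thesis using epos by simp
  qed
  have ec: "e dvd c" and er: "e dvd r1" by (simp_all add: e_def)
  have esc: "\<forall>p. prime p \<longrightarrow> p \<noteq> 2 \<longrightarrow> p dvd \<delta> \<longrightarrow> \<not> p dvd b \<longrightarrow> p dvd N\<epsilon> \<and> p dvd u*g^2 \<and> p dvd u*(c*g^2)"
  proof (intro allI impI)
    fix p :: int assume p: "prime p" "p \<noteq> 2" "p dvd \<delta>" "\<not> p dvd b"
    have "p dvd t*b^2+u*a" "p dvd u*g" using p(3) S(5) by auto
    thus "p dvd N\<epsilon> \<and> p dvd u*g^2 \<and> p dvd u*(c*g^2)" using escape[OF p(1,2) _ _ p(4) E3 EN] by blast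
  qed
  have Ndiv: "u * N\<alpha> div core N\<alpha> = u*g^2"
  proof -
    have "u * N\<alpha> = core N\<alpha> * (u*g^2)" using g(2) by (simp add: algebra_simps)
    thus ?thesis using cnz unfolding c_def by (metis nonzero_mult_div_cancel_left)
  qed
  define G where "G = gcd (u*g^2) N\<epsilon>"
  have Gnz: "G \<noteq> 0" using assms(6) g by (simp add: G_def)
  have finAll: "\<And>\<phi> k Z. (\<phi> = e \<or> \<phi> = c div e) \<Longrightarrow> (2*b^2*\<phi>*\<kappa>')*k^2 = \<delta>*Z \<Longrightarrow> \<exists>f r s. (f = Z \<or> f = -Z) \<and> f*y = b*(r^2 - c*s^2) \<and>
       of_int (f^2)*(of_int x + of_int N\<epsilon>*of_int g*W) = (of_int a + of_int g*W)*(of_int r + of_int s*W)^4"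
  proof -
    fix \<phi> k Z assume phi: "\<phi> = e \<or> \<phi> = c div e" and kZ1: "(2*b^2*\<phi>*\<kappa>')*k^2 = \<delta>*Z"
    show "\<exists>f r s. (f = Z \<or> f = -Z) \<and> f*y = b*(r^2 - c*s^2) \<and>
       of_int (f^2)*(of_int x + of_int N\<epsilon>*of_int g*W) = (of_int a + of_int g*W)*(of_int r + of_int s*W)^4"
    proof (cases "\<phi> = e")
      case True
      have fe: "Z*\<delta> = 2*b^2*\<kappa>*k^2" using kZ1 True ke by (simp add: algebra_simps)
      have kne: "\<kappa> \<noteq> 0" and dne: "\<delta> \<noteq> 0" using kpos dpos by auto
      obtain f' where f': "f' = Z \<or> f' = -Z" "f'*y = b*((k*r1)^2 - c*(k*s1)^2)"
        "\<forall>w::complex. w^2 = of_int c \<longrightarrow> of_int (f'^2)*(of_int x + of_int N\<epsilon>*of_int g*w)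
          = (of_int a + of_int g*w)*(of_int (k*r1) + of_int (k*s1)*w)^4"
        using opt1[OF KEYc F1 bnz kne dne fe] by blast
      show ?thesis
        apply (rule exI[of _ f'], rule exI[of _ "k*r1"], rule exI[of _ "k*s1"])
        using f' W2 by blast
    next
      case False
      hence phi2: "\<phi> = c div e" using phi by simp
      have ce: "c = e*(c div e)" using ec by simp
      have re: "r1 = e*(r1 div e)" using er by simp
      have fe: "Z*\<delta> = 2*b^2*\<kappa>'*(c div e)*k^2" using kZ1 phi2 by (simp add: algebra_simps)
      have kne: "\<kappa> \<noteq> 0" and dne: "\<delta> \<noteq> 0" and ene: "e \<noteq> 0" using kpos dpos epos by auto
      obtain f' where f': "f' = Z \<or> f' = -Z" "f'*y = b*((k*(c div e)*s1)^2 - c*(k*(r1 div e))^2)"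
        "\<forall>w::complex. w^2 = of_int c \<longrightarrow> of_int (f'^2)*(of_int x + of_int N\<epsilon>*of_int g*w)
          = (of_int a + of_int g*w)*(of_int (k*(c div e)*s1) + of_int (k*(r1 div e))*w)^4"
        using opt2[OF KEYc F1 bnz kne dne ene ce re ke fe] by blast
      show ?thesis
        apply (rule exI[of _ f'], rule exI[of _ "k*(c div e)*s1"], rule exI[of _ "k*(r1 div e)"])
        using f' W2 by blast
    qed
  qed
  have partA: "\<exists>f r s f'. f \<noteq> 0
        \<and> of_int (f^2) * (of_int x + of_int N\<epsilon> * isqrt N\<alpha>)
            = (of_int a + isqrt N\<alpha>) * (of_int r + of_int s * isqrt (core N\<alpha>))^4
        \<and> f * y = b * (r^2 - core N\<alpha> * s^2)
        \<and> f' dvd core N\<alpha> \<and> 0 < f'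
        \<and> real_of_int f' < max 2 (sqrt \<bar>real_of_int (core N\<alpha>)\<bar>)
        \<and> f dvd 4 * b^2 * rad (f' * gcd (u * N\<alpha> div core N\<alpha>) N\<epsilon>)"
  proof -
    define c1 where "c1 = \<bar>c\<bar> div e"
    have cabs: "\<bar>c\<bar> = e * c1" using ec unfolding c1_def by simp
    have c1pos: "c1 > 0"
    proof -
      have "0 < e*c1" using cabs cnz by simp
      thus ?thesis using epos zero_less_mult_pos by blast
    qed
    have cdiv_abs: "\<bar>c div e\<bar> = c1"
    proof -
      obtain q where q: "c = e*q" using ec by blast
      have "\<bar>c\<bar> = e*\<bar>q\<bar>" using q epos by (simp add: abs_mult)
      hence "c1 = \<bar>q\<bar>" using cabs epos by simp
      thus ?thesis using q epos by simp
    qed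
    obtain \<phi> where phi: "\<phi> = e \<or> \<phi> = c div e" and philt: "real_of_int \<bar>\<phi>\<bar> < max 2 (sqrt \<bar>real_of_int c\<bar>)"
    proof (cases "e \<le> c1")
      case True
      have "real_of_int \<bar>e\<bar> < max 2 (sqrt \<bar>real_of_int c\<bar>)"
      proof (cases "e = 1")
        case True thus ?thesis by simp
      next
        case False
        have "e^2 \<le> \<bar>c\<bar>" using True cabs epos by (simp add: power2_eq_square)
        moreover have "e^2 \<noteq> \<bar>c\<bar>"
        proof
          assume "e^2 = \<bar>c\<bar>"
          hence "e^2 dvd c" by simp
          hence "is_unit e" using sqc squarefreeD by blast
          thus False using False epos by simp
        qed
        ultimately have "e^2 < \<bar>c\<bar>" by simp
        hence "(real_of_int e)^2 < \<bar>real_of_int c\<bar>" by (metis of_int_abs of_int_less_iff of_int_power)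
        hence "real_of_int e < sqrt \<bar>real_of_int c\<bar>" by (rule real_less_rsqrt)
        thus ?thesis using epos by simp
      qed
      thus ?thesis using that by blast
    next
      case False
      have "c1^2 < \<bar>c\<bar>" using False cabs c1pos by (simp add: power2_eq_square)
      hence "(real_of_int c1)^2 < \<bar>real_of_int c\<bar>" by (metis of_int_abs of_int_less_iff of_int_power)
      hence "real_of_int c1 < sqrt \<bar>real_of_int c\<bar>" by (rule real_less_rsqrt)
      hence "real_of_int \<bar>c div e\<bar> < max 2 (sqrt \<bar>real_of_int c\<bar>)" using cdiv_abs by simp
      thus ?thesis using that by blast
    qed
    have phic: "\<phi> dvd c"
    proof -
      have "c = (c div e) * e" using ec by simp
      hence "(c div e) dvd c" by (metis dvd_triv_left)
      thus ?thesis using phi ec by blast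
    qed
    have phinz: "\<phi> \<noteq> 0" using phic cnz by auto
    have phisq: "\<forall>p. prime p \<longrightarrow> multiplicity p \<phi> \<le> 1"
      using sqf_mult_le1 squarefree_mono[OF phic sqc] by blast
    have Xnz: "2*b^2*\<phi>*\<kappa>' \<noteq> 0" using bnz phinz k'pos by simp
    obtain k Z where kZ: "(2*b^2*\<phi>*\<kappa>')*k^2 = \<delta>*Z" "Z \<noteq> 0"
      "\<forall>p. prime p \<longrightarrow> (multiplicity p Z + multiplicity p \<delta> \<le> multiplicity p (2*b^2*\<phi>*\<kappa>')) \<or>
             (multiplicity p Z \<le> 1 \<and> multiplicity p (2*b^2*\<phi>*\<kappa>') < multiplicity p \<delta>)"
      using sq_adjust[OF Xnz, of \<delta>] dpos by auto
    have escG: "\<forall>p. prime p \<longrightarrow> p \<noteq> 2 \<longrightarrow> p dvd \<delta> \<longrightarrow> \<not> p dvd b \<longrightarrow> p dvd G"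
      using esc unfolding G_def by simp
    have Zdvd: "Z dvd 4*b^2*rad (\<bar>\<phi>\<bar>*G)"
      using bound_a[OF kZ(2) _ bnz phinz Gnz _ kZ(3) k'2 phisq escG] dpos k'pos by simp
    have fin: "\<exists>f r s. (f = Z \<or> f = -Z) \<and> f*y = b*(r^2 - c*s^2) \<and>
       of_int (f^2)*(of_int x + of_int N\<epsilon>*of_int g*W) = (of_int a + of_int g*W)*(of_int r + of_int s*W)^4"
      using finAll phi kZ(1) by blast
    then obtain f r s where frs: "f = Z \<or> f = -Z" "f*y = b*(r^2 - c*s^2)"
       "of_int (f^2)*(of_int x + of_int N\<epsilon>*of_int g*W) = (of_int a + of_int g*W)*(of_int r + of_int s*W)^4"
      by blast
    have "f \<noteq> 0" using frs(1) kZ(2) by auto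
    moreover have "f dvd 4*b^2*rad (\<bar>\<phi>\<bar>*G)" using frs(1) Zdvd by auto
    moreover have "of_int (f^2) * (of_int x + of_int N\<epsilon> * isqrt N\<alpha>)
            = (of_int a + isqrt N\<alpha>) * (of_int r + of_int s * isqrt (core N\<alpha>))^4"
      using frs(3) unfolding isN W_def c_def by (simp add: mult.assoc)
    moreover have "\<bar>\<phi>\<bar> dvd core N\<alpha>" "0 < \<bar>\<phi>\<bar>" using phic phinz unfolding c_def by auto
    moreover have "f * y = b * (r^2 - core N\<alpha> * s^2)" using frs(2) unfolding c_def .
    moreover have "real_of_int \<bar>\<phi>\<bar> < max 2 (sqrt \<bar>real_of_int (core N\<alpha>)\<bar>)" using philt unfolding c_def .
    moreover have "f dvd 4 * b^2 * rad (\<bar>\<phi>\<bar> * gcd (u * N\<alpha> div core N\<alpha>) N\<epsilon>)"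
      using \<open>f dvd 4*b^2*rad (\<bar>\<phi>\<bar>*G)\<close> unfolding Ndiv G_def .
    ultimately show ?thesis by blast
  qed
  have partB: "is_square (- N\<alpha>) \<longrightarrow>
        (\<exists>f r s. f \<noteq> 0
          \<and> f dvd b^2 * rad (gcd (u * N\<alpha>) N\<epsilon>)
          \<and> f * y = b * (r^2 - core N\<alpha> * s^2)
          \<and> (of_int (f^2) * (of_int x + of_int N\<epsilon> * isqrt N\<alpha>)
               = (of_int a + isqrt N\<alpha>) * (of_int r + of_int s * isqrt (core N\<alpha>))^4
             \<or> - of_int (f^2) * (of_int x + of_int N\<epsilon> * isqrt N\<alpha>)
               = (of_int a + isqrt N\<alpha>) * (of_int r + of_int s * isqrt (core N\<alpha>))^4))"
  proof
    assume sqN: "is_square (- N\<alpha>)"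
    then obtain m where m: "- N\<alpha> = m^2" unfolding is_square_def by blast
    have "core N\<alpha> = -1"
      by (rule core_eq[of "-1" N\<alpha> m]) (use m Nnz in auto)
    hence hc: "c = -1" by (simp add: c_def)
    have e1: "e = 1" using hc by (simp add: e_def)
    have k12: "\<kappa> = 1 \<or> \<kappa> = 2"
    proof -
      have "\<kappa> dvd 2" using kd2e e1 by simp
      hence "\<kappa> \<le> 2" using zdvd_imp_le by simp
      thus ?thesis using kpos by auto
    qed
    have D1: "multiplicity 2 \<delta> \<ge> 1"
    proof -
      have "(t*b^2+u*a)^2 + (u*g)^2 = 4*(b^2*y^2)" using I1 hc by simp
      hence "even (t*b^2+u*a) \<and> even (u*g)" by (rule sumsq_4)
      hence "2 dvd \<delta>" using S(5) by simp
      hence "multiplicity 2 \<delta> > 0" using dpos by (simp add: prime_multiplicity_gt_zero_iff)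
      thus ?thesis by simp
    qed
    define j :: int where "j = (if odd (multiplicity 2 \<delta>) then 1 else 2)"
    have j12: "j = 1 \<or> j = 2" by (simp add: j_def)
    have par: "even (multiplicity 2 j + 1 + multiplicity 2 \<delta>)"
      by (simp add: j_def mult_2_2)
    have Xnz: "2*b^2*j \<noteq> 0" using bnz j12 by auto
    obtain k Z where kZ: "(2*b^2*j)*k^2 = \<delta>*Z" "Z \<noteq> 0"
      "\<forall>p. prime p \<longrightarrow> (multiplicity p Z + multiplicity p \<delta> \<le> multiplicity p (2*b^2*j)) \<or>
             (multiplicity p Z \<le> 1 \<and> multiplicity p (2*b^2*j) < multiplicity p \<delta>)"
      using sq_adjust[OF Xnz, of \<delta>] dpos by auto
    define Gb where "Gb = gcd (u * N\<alpha>) N\<epsilon>"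
    have Gbnz: "Gb \<noteq> 0" using assms(6) Nnz by (simp add: Gb_def)
    have NN: "N\<alpha> = c*g^2" using g(2) by (simp add: c_def)
    have escG: "\<forall>p. prime p \<longrightarrow> p \<noteq> 2 \<longrightarrow> p dvd \<delta> \<longrightarrow> \<not> p dvd b \<longrightarrow> p dvd Gb"
      using esc unfolding Gb_def NN by simp
    have dne: "\<delta> \<noteq> 0" using dpos by simp
    have Zdvd: "Z dvd b^2*rad Gb" by (rule bound_b[OF kZ(2) dne bnz Gbnz j12 kZ(1) kZ(3) D1 par escG])
    have kne: "\<kappa> \<noteq> 0" using kpos by simp
    have KEYm: "\<forall>w::complex. w^2 = of_int (-1) \<longrightarrow> 4*of_int b^4*of_int \<kappa>^2*(of_int x + of_int N\<epsilon>*of_int g*w)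
          = (of_int a + of_int g*w)*of_int \<delta>^2*(of_int r1 + of_int s1*w)^4" using KEYc unfolding hc .
    have F1m: "(\<delta>*(r1^2 - (-1)*s1^2))^2 = (2*\<kappa>*b*y)^2" using F1 unfolding hc .
    have W2m: "W^2 = of_int (-1)" using W2 unfolding hc .
    have fin: "\<exists>f r s. (f = Z \<or> f = -Z) \<and> f*y = b*(r^2 - (-1)*s^2) \<and>
       (of_int (f^2)*(of_int x + of_int N\<epsilon>*of_int g*W) = (of_int a + of_int g*W)*(of_int r + of_int s*W)^4
       \<or> - of_int (f^2)*(of_int x + of_int N\<epsilon>*of_int g*W) = (of_int a + of_int g*W)*(of_int r + of_int s*W)^4)"
    proof (cases "\<kappa> = j")
      case True
      have fe: "Z*\<delta> = 2*b^2*\<kappa>*k^2" using kZ(1) True by (simp add: algebra_simps)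
      obtain f' where f': "f' = Z \<or> f' = -Z" "f'*y = b*((k*r1)^2 - c*(k*s1)^2)"
        "\<forall>w::complex. w^2 = of_int c \<longrightarrow> of_int (f'^2)*(of_int x + of_int N\<epsilon>*of_int g*w)
          = (of_int a + of_int g*w)*(of_int (k*r1) + of_int (k*s1)*w)^4"
        using opt1[OF KEYc F1 bnz kne dne fe] by blast
      show ?thesis
        apply (rule exI[of _ f'], rule exI[of _ "k*r1"], rule exI[of _ "k*s1"])
        using f' W2 unfolding hc by blast
    next
      case False
      obtain l m1 m2 where lm: "l \<noteq> 0" "r1 - s1 = l*m1" "r1 + s1 = l*m2" "Z*\<delta>*l^2 = 4*b^2*\<kappa>*k^2"
      proof (cases "\<kappa> = 1")
        case True
        hence "j = 2" using False j12 by auto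
        hence "Z*\<delta>*1^2 = 4*b^2*\<kappa>*k^2" using kZ(1) True by (simp add: algebra_simps)
        thus ?thesis using that[of 1 "r1 - s1" "r1 + s1"] by simp
      next
        case k1: False
        hence k2: "\<kappa> = 2" using k12 by simp
        hence "j = 1" using False j12 by auto
        hence fe: "Z*\<delta>*2^2 = 4*b^2*\<kappa>*k^2" using kZ(1) k2 by (simp add: algebra_simps)
        have "even (r1^2 + c*s1^2)" using S(4) k2 by (metis gcd_dvd1)
        hence "even (r1 - s1)" using hc by simp
        then obtain m1 where m1: "r1 - s1 = 2*m1" by blast
        have m2: "r1 + s1 = 2*(m1 + s1)" using m1 by simp
        show ?thesis using that[OF _ m1 m2 fe] by simp
      qed
      obtain f' where f': "f' = Z \<or> f' = -Z" "f'*y = b*((k*m1)^2 - (-1)*(k*m2)^2)"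
        "\<forall>w::complex. w^2 = of_int (-1) \<longrightarrow> - of_int (f'^2)*(of_int x + of_int N\<epsilon>*of_int g*w)
          = (of_int a + of_int g*w)*(of_int (k*m1) + of_int (k*m2)*w)^4"
        using opt3[OF KEYm F1m bnz kne dne lm(1) lm(2) lm(3) lm(4)] by blast
      show ?thesis
        apply (rule exI[of _ f'], rule exI[of _ "k*m1"], rule exI[of _ "k*m2"])
        using f' W2m by blast
    qed
    then obtain f r s where frs: "f = Z \<or> f = -Z" "f*y = b*(r^2 - (-1)*s^2)"
       "of_int (f^2)*(of_int x + of_int N\<epsilon>*of_int g*W) = (of_int a + of_int g*W)*(of_int r + of_int s*W)^4
       \<or> - of_int (f^2)*(of_int x + of_int N\<epsilon>*of_int g*W) = (of_int a + of_int g*W)*(of_int r + of_int s*W)^4"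
      by blast
    have "f \<noteq> 0" using frs(1) kZ(2) by auto
    moreover have "f dvd b^2 * rad (gcd (u * N\<alpha>) N\<epsilon>)" using frs(1) Zdvd unfolding Gb_def by auto
    moreover have "f * y = b * (r^2 - core N\<alpha> * s^2)" using frs(2) \<open>core N\<alpha> = -1\<close> by simp
    moreover have "of_int (f^2) * (of_int x + of_int N\<epsilon> * isqrt N\<alpha>)
               = (of_int a + isqrt N\<alpha>) * (of_int r + of_int s * isqrt (core N\<alpha>))^4
             \<or> - of_int (f^2) * (of_int x + of_int N\<epsilon> * isqrt N\<alpha>)
               = (of_int a + isqrt N\<alpha>) * (of_int r + of_int s * isqrt (core N\<alpha>))^4"
      using frs(3) unfolding isN W_def c_def by (simp add: mult.assoc)
    ultimately show "\<exists>f r s. f \<noteq> 0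
          \<and> f dvd b^2 * rad (gcd (u * N\<alpha>) N\<epsilon>)
          \<and> f * y = b * (r^2 - core N\<alpha> * s^2)
          \<and> (of_int (f^2) * (of_int x + of_int N\<epsilon> * isqrt N\<alpha>)
               = (of_int a + isqrt N\<alpha>) * (of_int r + of_int s * isqrt (core N\<alpha>))^4
             \<or> - of_int (f^2) * (of_int x + of_int N\<epsilon> * isqrt N\<alpha>)
               = (of_int a + isqrt N\<alpha>) * (of_int r + of_int s * isqrt (core N\<alpha>))^4)" by blast
  qed
  have partC: "\<forall>(l::nat) (m::nat) (p::int). l \<le> 1 \<and> m \<le> 1 \<and> l + m \<ge> 1 \<and> prime p \<and> odd p
          \<and> core \<bar>N\<alpha>\<bar> = 2^l * p^m \<longrightarrow>
        (\<exists>f r s. f \<noteq> 0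
          \<and> of_int (f^2) * (of_int x + of_int N\<epsilon> * isqrt N\<alpha>)
              = (of_int a + isqrt N\<alpha>) * (of_int r + of_int s * isqrt (core N\<alpha>))^4
          \<and> f * y = b * (r^2 - core N\<alpha> * s^2)
          \<and> (if N\<alpha> mod 4 = 1 \<and> 4 dvd d
             then f dvd 4 * b^2 * rad (gcd (u * N\<alpha> div core N\<alpha>) N\<epsilon>)
             else f dvd 2 * b^2 * rad (gcd (u * N\<alpha> div core N\<alpha>) N\<epsilon>)))"
  proof (intro allI impI)
    fix l m :: nat and p :: int
    assume H: "l \<le> 1 \<and> m \<le> 1 \<and> l + m \<ge> 1 \<and> prime p \<and> odd p \<and> core \<bar>N\<alpha>\<bar> = 2^l * p^m"
    hence l1: "l \<le> 1" and m1: "m \<le> 1" and pp: "prime p" and po: "odd p" and cN: "core \<bar>N\<alpha>\<bar> = 2^l * p^m" by auto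
    have "core \<bar>N\<alpha>\<bar> = \<bar>c\<bar>"
    proof (rule core_eq[of "\<bar>c\<bar>" _ g])
      show "squarefree \<bar>c\<bar>" using sqc by (metis abs_of_nonneg abs_of_nonpos linear squarefree_minus)
      have h: "\<bar>core N\<alpha> * g^2\<bar> = \<bar>core N\<alpha>\<bar> * g^2" by (simp add: abs_mult)
      show "\<bar>N\<alpha>\<bar> = \<bar>c\<bar> * g^2" unfolding c_def using g(2) h by metis
      show "\<bar>N\<alpha>\<bar> \<noteq> 0" using Nnz by simp
    qed
    hence cabs: "\<bar>c\<bar> = 2^l * p^m" using cN by simp
    have l2: "(2::int)^l dvd 2" using l1 by (cases l) auto
    define \<phi> where "\<phi> = (if e dvd 2 then e else c div e)"
    have phi: "\<phi> = e \<or> \<phi> = c div e" by (simp add: \<phi>_def)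
    have phi2: "\<phi> dvd 2"
    proof (cases "e dvd 2")
      case True thus ?thesis by (simp add: \<phi>_def)
    next
      case False
      define q where "q = c div e"
      have cq: "c = e*q" using ec by (simp add: q_def)
      have eq: "2^l * p^m = e * \<bar>q\<bar>" using cabs cq epos by (simp add: abs_mult)
      have pe: "p dvd e"
      proof (rule ccontr)
        assume npe: "\<not> p dvd e"
        have "coprime p e" using prime_imp_coprime[OF pp npe] .
        hence "coprime e p" by (simp add: coprime_commute)
        hence "coprime e (p^m)" by simp
        moreover have "e dvd 2^l * p^m" using eq by simp
        ultimately have "e dvd 2^l" by (metis coprime_dvd_mult_left_iff)
        hence "e dvd 2" using l2 by (rule dvd_trans)
        thus False using False by simp
      qed
      then obtain e' where e': "e = p*e'" by blast
      have mm: "m = 1"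
      proof (rule ccontr)
        assume "m \<noteq> 1" hence "m = 0" using m1 by simp
        hence "2^l = p*(e'*\<bar>q\<bar>)" using eq e' by (simp add: algebra_simps)
        hence "p dvd 2^l" by simp
        hence "p dvd 2" using pp prime_dvd_power by blast
        hence "p = 2" using pp by (metis prime_nat_iff_prime even_numeral prime_dvd_4 dvd_mult2 mult_2 numeral_Bit0 numeral_One) 
        thus False using po by simp
      qed
      have "p*2^l = p*(e'*\<bar>q\<bar>)" using eq e' mm by (simp add: algebra_simps)
      hence "2^l = e'*\<bar>q\<bar>" using pp by simp
      hence "\<bar>q\<bar> dvd 2^l" by simp
      hence "\<bar>q\<bar> dvd 2" using l2 by (rule dvd_trans)
      thus ?thesis using False by (simp add: \<phi>_def q_def)
    qed
    have phinz: "\<phi> \<noteq> 0" using phi2 by auto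
    define K :: int where "K = (if N\<alpha> mod 4 = 1 \<and> 4 dvd d then 4 else 2)"
    have Knz: "K \<noteq> 0" and K2: "2 dvd K" by (auto simp: K_def)
    have dne: "\<delta> \<noteq> 0" using dpos by simp
    have vphi: "multiplicity 2 \<phi> \<le> 1"
    proof -
      have "multiplicity 2 \<phi> \<le> multiplicity 2 (2::int)" by (rule dvd_imp_multiplicity_le[OF phi2]) simp
      thus ?thesis using mult_2_2 by simp
    qed
    have vk: "multiplicity 2 \<kappa>' \<le> 1"
    proof -
      have "multiplicity 2 \<kappa>' \<le> multiplicity 2 (2::int)" by (rule dvd_imp_multiplicity_le[OF k'2]) simp
      thus ?thesis using mult_2_2 by simp
    qed
    have vK: "multiplicity 2 K \<ge> 1"
    proof -
      have "multiplicity 2 (2::int) \<le> multiplicity 2 K" by (rule dvd_imp_multiplicity_le[OF K2 Knz])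
      thus ?thesis using mult_2_2 by simp
    qed
    have vd: "even \<delta> \<Longrightarrow> multiplicity 2 \<delta> \<ge> 1"
      using dpos by (simp add: prime_multiplicity_gt_zero_iff Suc_le_eq)
    have H2: "multiplicity 2 \<phi> + multiplicity 2 \<kappa>' + 1 \<le> multiplicity 2 K + multiplicity 2 \<delta>"
    proof (cases "even c")
      case True
      have "even \<delta> \<and> odd \<kappa>'" using c_even_facts[OF True sqc S(3) S(4) _ ke F1] by (simp add: e_def)
      hence "multiplicity 2 \<kappa>' = 0" "multiplicity 2 \<delta> \<ge> 1" using vd by (auto simp: not_dvd_imp_multiplicity_0)
      thus ?thesis using vphi vK by linarith
    next
      case codd: False
      have phic: "\<phi> dvd c"
      proof -
        have "c = (c div e) * e" using ec by simp
        hence "(c div e) dvd c" by (metis dvd_triv_left)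
        thus ?thesis using phi ec by blast
      qed
      have "odd \<phi>" using phic codd by (meson dvd_trans)
      hence v0: "multiplicity 2 \<phi> = 0" by (simp add: not_dvd_imp_multiplicity_0)
      show ?thesis
      proof (cases "even \<delta>")
        case True thus ?thesis using v0 vk vK vd by linarith
      next
        case dodd: False
        show ?thesis
        proof (cases "even \<kappa>'")
          case False
          hence "multiplicity 2 \<kappa>' = 0" by (simp add: not_dvd_imp_multiplicity_0)
          thus ?thesis using v0 vK by linarith
        next
          case True
          hence ke2: "even \<kappa>" using ke by simp
          have kdv: "\<kappa> dvd r1^2 + c*s1^2" using S(4) by simp
          have "(a^2 - b^4*d) mod 4 = 1 \<and> 4 dvd d"
            by (rule c_odd_special[OF codd dodd ke2 kd2e ec S(6) S(8) kdv S(3) E2 E3 EN])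
          hence "K = 4" by (simp add: K_def N\<alpha>_def)
          hence "multiplicity 2 K = 2" using mult_4[of 2] mult_2_2 by simp
          thus ?thesis using v0 vk by linarith
        qed
      qed
    qed
    have Xnz: "2*b^2*\<phi>*\<kappa>' \<noteq> 0" using bnz phinz k'pos by simp
    obtain k Z where kZ: "(2*b^2*\<phi>*\<kappa>')*k^2 = \<delta>*Z" "Z \<noteq> 0"
      "\<forall>p. prime p \<longrightarrow> (multiplicity p Z + multiplicity p \<delta> \<le> multiplicity p (2*b^2*\<phi>*\<kappa>')) \<or>
             (multiplicity p Z \<le> 1 \<and> multiplicity p (2*b^2*\<phi>*\<kappa>') < multiplicity p \<delta>)"
      using sq_adjust[OF Xnz, of \<delta>] dpos by auto
    have escG: "\<forall>p. prime p \<longrightarrow> p \<noteq> 2 \<longrightarrow> p dvd \<delta> \<longrightarrow> \<not> p dvd b \<longrightarrow> p dvd G"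
      using esc unfolding G_def by simp
    have k'nz: "\<kappa>' \<noteq> 0" using k'pos by simp
    have Zdvd: "Z dvd K*b^2*rad G"
      by (rule bound_c[OF kZ(2) dne bnz phinz Gnz k'nz Knz kZ(3) k'2 phi2 K2 H2 escG])
    have fin: "\<exists>f r s. (f = Z \<or> f = -Z) \<and> f*y = b*(r^2 - c*s^2) \<and>
       of_int (f^2)*(of_int x + of_int N\<epsilon>*of_int g*W) = (of_int a + of_int g*W)*(of_int r + of_int s*W)^4"
      using finAll phi kZ(1) by blast
    then obtain f r s where frs: "f = Z \<or> f = -Z" "f*y = b*(r^2 - c*s^2)"
       "of_int (f^2)*(of_int x + of_int N\<epsilon>*of_int g*W) = (of_int a + of_int g*W)*(of_int r + of_int s*W)^4"
      by blast
    have "f \<noteq> 0" using frs(1) kZ(2) by auto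
    moreover have fd: "f dvd K*b^2*rad G" using frs(1) Zdvd by auto
    moreover have "of_int (f^2) * (of_int x + of_int N\<epsilon> * isqrt N\<alpha>)
            = (of_int a + isqrt N\<alpha>) * (of_int r + of_int s * isqrt (core N\<alpha>))^4"
      using frs(3) unfolding isN W_def c_def by (simp add: mult.assoc)
    moreover have "f * y = b * (r^2 - core N\<alpha> * s^2)" using frs(2) unfolding c_def .
    moreover have "(if N\<alpha> mod 4 = 1 \<and> 4 dvd d
             then f dvd 4 * b^2 * rad (gcd (u * N\<alpha> div core N\<alpha>) N\<epsilon>)
             else f dvd 2 * b^2 * rad (gcd (u * N\<alpha> div core N\<alpha>) N\<epsilon>))"
      using fd unfolding Ndiv G_def K_def by (cases "N\<alpha> mod 4 = 1 \<and> 4 dvd d") auto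
    ultimately show "\<exists>f r s. f \<noteq> 0
          \<and> of_int (f^2) * (of_int x + of_int N\<epsilon> * isqrt N\<alpha>)
              = (of_int a + isqrt N\<alpha>) * (of_int r + of_int s * isqrt (core N\<alpha>))^4
          \<and> f * y = b * (r^2 - core N\<alpha> * s^2)
          \<and> (if N\<alpha> mod 4 = 1 \<and> 4 dvd d
             then f dvd 4 * b^2 * rad (gcd (u * N\<alpha> div core N\<alpha>) N\<epsilon>)
             else f dvd 2 * b^2 * rad (gcd (u * N\<alpha> div core N\<alpha>) N\<epsilon>))" by blast
  qed
  show ?thesis using partA partB partC by blast
qed


end
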